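(* Let $\Omega\subset\mathbb{R}^d$, $d\ge2$, be an open bounded set with smooth boundary. Let $\psi\in H_0^1(\Omega)$, $u=\nabla^\perp\psi$, $\theta=\Lambda\psi$, and let $\phi\in C_0^\infty(\Omega)$. Then $$\int_\Omega\theta\,u\cdot\nabla\phi\,dx=\frac12\int_\Omega[\Lambda,\nabla^\perp]\psi\cdot\nabla\phi\,\psi\,dx-\frac12\int_\Omega\nabla^\perp\psi\cdot[\Lambda,\nabla\phi]\psi\,dx,$$ where $[\Lambda,\nabla^\perp]\psi=\Lambda\nabla^\perp\psi-\nabla^\perp\Lambda\psi$ and $[\Lambda,\nabla\phi]\psi=\Lambda(\psi\nabla\phi)-\nabla\phi\,\Lambda\psi$ (the integrals being understood as the appropriate duality pairings).
   Context: $\Lambda=(-\Delta)^{1/2}$ is the square root of the Dirichlet Laplacian on $\Omega$, defined through an $L^2$-orthonormal Dirichlet eigenfunction basis $\{w_j\}$, $-\Delta w_j=\lambda_jw_j$: $\Lambda f=\sum_j\lambda_j^{1/2}f_jw_j$, $f_j=\int_\Omega fw_j$; its domain $\mathcal D(\Lambda)$ coincides with $H_0^1(\Omega)$. $\nabla^\perp=(-\partial_{x_2},\partial_{x_1})$ (in $d\ge3$, $(-\partial_{x_2},\partial_{x_1},0,\dots,0)$), so that $\nabla^\perp\cdot\nabla\phi=0$. *)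

theory Defs
  imports "HOL-Analysis.Analysis"
begin

type_synonym 'n fn = "real^'n \<Rightarrow> real"

definition pd :: "'n::finite \<Rightarrow> 'n fn \<Rightarrow> 'n fn" where
  "pd i f x = frechet_derivative f (at x) (axis i 1)"

coinductive smooth :: "'n::finite fn \<Rightarrow> bool" where
  "(\<forall>x. f differentiable (at x)) \<Longrightarrow> (\<forall>i. smooth (pd i f)) \<Longrightarrow> smooth f"

definition test_fun :: "(real^'n::finite) set \<Rightarrow> 'n fn \<Rightarrow> bool" where
  "test_fun \<Omega> \<phi> \<longleftrightarrow> smooth \<phi> \<and> compact (closure {x. \<phi> x \<noteq> 0})
      \<and> closure {x. \<phi> x \<noteq> 0} \<subseteq> \<Omega>"

definition smooth_bounded_domain :: "(real^'n::finite) set \<Rightarrow> bool" where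
  "smooth_bounded_domain \<Omega> \<longleftrightarrow> open \<Omega> \<and> bounded \<Omega> \<and>
     (\<forall>p\<in>frontier \<Omega>. \<exists>U \<rho>. open U \<and> p \<in> U \<and> smooth \<rho> \<and>
        \<Omega> \<inter> U = {x\<in>U. \<rho> x < 0} \<and>
        (\<forall>x\<in>U. \<rho> x = 0 \<longrightarrow> (\<exists>i. pd i \<rho> x \<noteq> 0)))"

definition integ :: "(real^'n::finite) set \<Rightarrow> 'n fn \<Rightarrow> real" where
  "integ \<Omega> f = set_lebesgue_integral lebesgue \<Omega> f"

definition L2 :: "(real^'n::finite) set \<Rightarrow> 'n fn \<Rightarrow> bool" where
  "L2 \<Omega> f \<longleftrightarrow> set_borel_measurable lebesgue \<Omega> f \<and> set_integrable lebesgue \<Omega> (\<lambda>x. (f x)^2)"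

definition weak_pd :: "(real^'n::finite) set \<Rightarrow> 'n \<Rightarrow> 'n fn \<Rightarrow> 'n fn \<Rightarrow> bool" where
  "weak_pd \<Omega> i f g \<longleftrightarrow> L2 \<Omega> f \<and> L2 \<Omega> g \<and>
     (\<forall>\<phi>. test_fun \<Omega> \<phi> \<longrightarrow> integ \<Omega> (\<lambda>x. f x * pd i \<phi> x) = - integ \<Omega> (\<lambda>x. g x * \<phi> x))"

definition wpd :: "(real^'n::finite) set \<Rightarrow> 'n \<Rightarrow> 'n fn \<Rightarrow> 'n fn" where
  "wpd \<Omega> i f = (SOME g. weak_pd \<Omega> i f g)"

definition H1 :: "(real^'n::finite) set \<Rightarrow> 'n fn \<Rightarrow> bool" where
  "H1 \<Omega> f \<longleftrightarrow> L2 \<Omega> f \<and> (\<forall>i. \<exists>g. weak_pd \<Omega> i f g)"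

definition H01 :: "(real^'n::finite) set \<Rightarrow> 'n fn \<Rightarrow> bool" where
  "H01 \<Omega> f \<longleftrightarrow> H1 \<Omega> f \<and>
     (\<exists>\<phi>s. (\<forall>k. test_fun \<Omega> (\<phi>s k)) \<and>
        (\<lambda>k. integ \<Omega> (\<lambda>x. (f x - \<phi>s k x)^2)) \<longlonglongrightarrow> 0 \<and>
        (\<forall>i. (\<lambda>k. integ \<Omega> (\<lambda>x. (wpd \<Omega> i f x - pd i (\<phi>s k) x)^2)) \<longlonglongrightarrow> 0))"

definition coef :: "(real^'n::finite) set \<Rightarrow> (nat \<Rightarrow> 'n fn) \<Rightarrow> 'n fn \<Rightarrow> nat \<Rightarrow> real" where
  "coef \<Omega> w f j = integ \<Omega> (\<lambda>x. f x * w j x)"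

definition dirichlet_eigenbasis ::
    "(real^'n::finite) set \<Rightarrow> (nat \<Rightarrow> 'n fn) \<Rightarrow> (nat \<Rightarrow> real) \<Rightarrow> bool" where
  "dirichlet_eigenbasis \<Omega> w lam \<longleftrightarrow>
     (\<forall>j. H01 \<Omega> (w j) \<and>
        (\<forall>\<phi>. test_fun \<Omega> \<phi> \<longrightarrow>
           (\<Sum>i\<in>UNIV. integ \<Omega> (\<lambda>x. wpd \<Omega> i (w j) x * pd i \<phi> x))
             = lam j * integ \<Omega> (\<lambda>x. w j x * \<phi> x))) \<and>
     (\<forall>j k. integ \<Omega> (\<lambda>x. w j x * w k x) = (if j = k then 1 else 0)) \<and>
     (\<forall>f. L2 \<Omega> f \<longrightarrow>
        (\<lambda>n. integ \<Omega> (\<lambda>x. (f x - (\<Sum>j<n. coef \<Omega> w f j * w j x))^2)) \<longlonglongrightarrow> 0)"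

definition Lam :: "(real^'n::finite) set \<Rightarrow> (nat \<Rightarrow> 'n fn) \<Rightarrow> (nat \<Rightarrow> real) \<Rightarrow> 'n fn \<Rightarrow> 'n fn" where
  "Lam \<Omega> w lam f = (SOME g. L2 \<Omega> g \<and> (\<forall>j. coef \<Omega> w g j = sqrt (lam j) * coef \<Omega> w f j))"

(* duality pairing <Lambda f, g> = sum_j lam_j^(1/2) f_j g_j  (f in L^2, g in D(Lambda)) *)
definition Lam_pair :: "(real^'n::finite) set \<Rightarrow> (nat \<Rightarrow> 'n fn) \<Rightarrow> (nat \<Rightarrow> real) \<Rightarrow> 'n fn \<Rightarrow> 'n fn \<Rightarrow> real" where
  "Lam_pair \<Omega> w lam f g = (\<Sum>j. sqrt (lam j) * coef \<Omega> w f j * coef \<Omega> w g j)"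

definition gperp :: "(real^'n::finite) set \<Rightarrow> 'n \<Rightarrow> 'n \<Rightarrow> 'n fn \<Rightarrow> 'n \<Rightarrow> 'n fn" where
  "gperp \<Omega> i1 i2 f k x =
     (if k = i1 then - wpd \<Omega> i2 f x else if k = i2 then wpd \<Omega> i1 f x else 0)"

(* distributional pairing <(nabla^perp h)_k, g> = - int h * (k-th comp. of nabla^perp applied to g),
   for h in L^2, g in H_0^1 *)
definition perp_pair :: "(real^'n::finite) set \<Rightarrow> 'n \<Rightarrow> 'n \<Rightarrow> 'n fn \<Rightarrow> 'n \<Rightarrow> 'n fn \<Rightarrow> real" where
  "perp_pair \<Omega> i1 i2 h k g = - integ \<Omega> (\<lambda>x. h x * gperp \<Omega> i1 i2 g k x)"

end

theory Submission
  imports Defs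
begin

definition sq :: "'a measure \<Rightarrow> ('a \<Rightarrow> real) \<Rightarrow> bool" where
  "sq M f \<longleftrightarrow> f \<in> borel_measurable M \<and> integrable M (\<lambda>x. (f x)^2)"

lemma sq_meas[measurable_dest]: "sq M f \<Longrightarrow> f \<in> borel_measurable M"
  by (simp add: sq_def)

lemma sq_int: "sq M f \<Longrightarrow> integrable M (\<lambda>x. (f x)^2)"
  by (simp add: sq_def)

lemma sq_mult_int:
  assumes "sq M f" "sq M g" shows "integrable M (\<lambda>x. f x * g x)"
proof (rule Bochner_Integration.integrable_bound[where f="\<lambda>x. (f x)^2 + (g x)^2"])
  show "integrable M (\<lambda>x. (f x)\<^sup>2 + (g x)\<^sup>2)" using assms by (simp add: sq_def)
  show "(\<lambda>x. f x * g x) \<in> borel_measurable M" using assms by (simp add: sq_def borel_measurable_times)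
  show "AE x in M. norm (f x * g x) \<le> norm ((f x)\<^sup>2 + (g x)\<^sup>2)"
  proof (rule AE_I2)
    fix x
    have "2 * \<bar>f x * g x\<bar> \<le> (f x)\<^sup>2 + (g x)\<^sup>2"
    proof -
      have "0 \<le> (\<bar>f x\<bar> - \<bar>g x\<bar>)^2" by simp
      then show ?thesis by (simp add: power2_eq_square algebra_simps abs_mult)
    qed
    then show "norm (f x * g x) \<le> norm ((f x)\<^sup>2 + (g x)\<^sup>2)" by auto
  qed
qed

lemma sq_add: assumes "sq M f" "sq M g" shows "sq M (\<lambda>x. f x + g x)"
proof -
  have "(\<lambda>x. (f x + g x)^2) = (\<lambda>x. (f x)^2 + (g x)^2 + 2 * (f x * g x))"
    by (auto simp: power2_eq_square algebra_simps)
  then show ?thesis using assms sq_mult_int[OF assms] by (simp add: sq_def borel_measurable_add)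
qed

lemma sq_cmult: assumes "sq M f" shows "sq M (\<lambda>x. c * f x)"
  using assms by (simp add: sq_def power_mult_distrib borel_measurable_times)

lemma sq_uminus: assumes "sq M f" shows "sq M (\<lambda>x. - f x)"
  using assms by (simp add: sq_def)

lemma sq_diff: assumes "sq M f" "sq M g" shows "sq M (\<lambda>x. f x - g x)"
  using sq_add[OF assms(1) sq_uminus[OF assms(2)]] by simp

lemma sq_zero: "sq M (\<lambda>x. 0)" by (simp add: sq_def)

lemma sq_sum: assumes "\<And>j. j \<in> A \<Longrightarrow> sq M (f j)" shows "sq M (\<lambda>x. \<Sum>j\<in>A. f j x)"
  using assms
proof (induction A rule: infinite_finite_induct)
  case (insert a A) then show ?case by (simp add: sq_add)
qed (auto simp: sq_zero)

lemma sq_bmult: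
  assumes "sq M f" "g \<in> borel_measurable M" "\<And>x. \<bar>g x\<bar> \<le> B"
  shows "sq M (\<lambda>x. f x * g x)"
  unfolding sq_def
proof
  show "(\<lambda>x. f x * g x) \<in> borel_measurable M" using assms by (simp add: sq_def borel_measurable_times)
  show "integrable M (\<lambda>x. (f x * g x)\<^sup>2)"
  proof (rule Bochner_Integration.integrable_bound[where f="\<lambda>x. B^2 * (f x)^2"])
    show "integrable M (\<lambda>x. B^2 * (f x)\<^sup>2)" using assms by (simp add: sq_def)
    have [measurable]: "f \<in> borel_measurable M" using assms by (simp add: sq_def)
    show "(\<lambda>x. (f x * g x)\<^sup>2) \<in> borel_measurable M" using assms by measurable
    show "AE x in M. norm ((f x * g x)\<^sup>2) \<le> norm (B^2 * (f x)\<^sup>2)"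
    proof (rule AE_I2)
      fix x
      have "(g x)^2 \<le> B^2" using assms(3)[of x]
        by (metis abs_ge_zero abs_le_square_iff abs_of_nonneg order.trans)
      then have "(g x)^2 * (f x)^2 \<le> B^2 * (f x)^2" by (simp add: mult_right_mono)
      then show "norm ((f x * g x)\<^sup>2) \<le> norm (B^2 * (f x)\<^sup>2)"
        by (simp add: power_mult_distrib mult.commute)
    qed
  qed
qed

lemma sq_bounded_fin:
  assumes "finite_measure M" "g \<in> borel_measurable M" "\<And>x. \<bar>g x\<bar> \<le> B"
  shows "sq M g"
proof -
  interpret finite_measure M by fact
  have "sq M (\<lambda>x. 1)" by (simp add: sq_def)
  from sq_bmult[OF this assms(2,3)] show ?thesis by simp
qed

lemma CS:
  assumes "sq M f" "sq M g"
  shows "(integral\<^sup>L M (\<lambda>x. f x * g x))^2 \<le> integral\<^sup>L M (\<lambda>x. (f x)^2) * integral\<^sup>L M (\<lambda>x. (g x)^2)"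
proof -
  define A where "A = integral\<^sup>L M (\<lambda>x. (f x)^2)"
  define B where "B = integral\<^sup>L M (\<lambda>x. (g x)^2)"
  define C where "C = integral\<^sup>L M (\<lambda>x. f x * g x)"
  have q: "0 \<le> A + 2 * t * C + t^2 * B" for t
  proof -
    have "0 \<le> integral\<^sup>L M (\<lambda>x. (f x + t * g x)^2)" by simp
    also have "integral\<^sup>L M (\<lambda>x. (f x + t * g x)^2)
       = integral\<^sup>L M (\<lambda>x. (f x)^2 + (2 * t) * (f x * g x) + t^2 * (g x)^2)"
      by (rule Bochner_Integration.integral_cong) (auto simp: power2_eq_square algebra_simps)
    also have "\<dots> = A + 2 * t * C + t^2 * B"
      using assms sq_mult_int[OF assms] unfolding A_def B_def C_def
      by (simp add: sq_def)
    finally show ?thesis .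
  qed
  have B0: "0 \<le> B" unfolding B_def by simp
  show ?thesis
  proof (cases "B = 0")
    case True
    have "C = 0"
    proof (rule ccontr)
      assume "C \<noteq> 0"
      have "0 \<le> A + 2 * (- (A + 1) / (2 * C)) * C" using q[of "- (A + 1) / (2 * C)"] True by simp
      also have "\<dots> = -1" using \<open>C \<noteq> 0\<close> by (simp add: field_simps)
      finally show False by simp
    qed
    then show ?thesis using True by (simp add: A_def B_def C_def[symmetric])
  next
    case False
    then have Bp: "B > 0" using B0 by simp
    have "0 \<le> A + 2 * (- C / B) * C + (- C / B)^2 * B" by (rule q)
    also have "\<dots> = A - C^2 / B" using Bp by (simp add: field_simps power2_eq_square)
    finally have "C^2 / B \<le> A" by simp
    then have "C^2 \<le> A * B" using Bp by (simp add: field_simps)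
    then show ?thesis by (simp add: A_def B_def C_def)
  qed
qed

lemma sq_cont:
  assumes "\<And>n. sq M (f n)" "sq M h" "sq M g"
    and "(\<lambda>n. integral\<^sup>L M (\<lambda>x. (f n x - h x)^2)) \<longlonglongrightarrow> 0"
  shows "(\<lambda>n. integral\<^sup>L M (\<lambda>x. f n x * g x)) \<longlonglongrightarrow> integral\<^sup>L M (\<lambda>x. h x * g x)"
proof -
  have d: "integral\<^sup>L M (\<lambda>x. f n x * g x) - integral\<^sup>L M (\<lambda>x. h x * g x)
         = integral\<^sup>L M (\<lambda>x. (f n x - h x) * g x)" for n
    using sq_mult_int[OF assms(1) assms(3)] sq_mult_int[OF assms(2,3)]
    by (simp add: left_diff_distrib)
  have b: "(integral\<^sup>L M (\<lambda>x. (f n x - h x) * g x))^2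
      \<le> integral\<^sup>L M (\<lambda>x. (f n x - h x)^2) * integral\<^sup>L M (\<lambda>x. (g x)^2)" for n
    by (rule CS[OF sq_diff[OF assms(1,2)] assms(3)])
  have "(\<lambda>n. integral\<^sup>L M (\<lambda>x. (f n x - h x)^2) * integral\<^sup>L M (\<lambda>x. (g x)^2)) \<longlonglongrightarrow> 0"
    using tendsto_mult[OF assms(4) tendsto_const] by simp
  then have "(\<lambda>n. (integral\<^sup>L M (\<lambda>x. (f n x - h x) * g x))^2) \<longlonglongrightarrow> 0"
    by (rule Lim_null_comparison[rotated]) (use b in auto)
  then have "(\<lambda>n. sqrt ((integral\<^sup>L M (\<lambda>x. (f n x - h x) * g x))^2)) \<longlonglongrightarrow> sqrt 0"
    by (intro tendsto_intros)
  then have "(\<lambda>n. integral\<^sup>L M (\<lambda>x. (f n x - h x) * g x)) \<longlonglongrightarrow> 0"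
    by (simp add: tendsto_rabs_zero_iff)
  then have "(\<lambda>n. integral\<^sup>L M (\<lambda>x. f n x * g x) - integral\<^sup>L M (\<lambda>x. h x * g x)) \<longlonglongrightarrow> 0"
    using d by simp
  then show ?thesis by (simp add: LIM_zero_iff)
qed

definition cf :: "'a measure \<Rightarrow> (nat \<Rightarrow> 'a \<Rightarrow> real) \<Rightarrow> ('a \<Rightarrow> real) \<Rightarrow> nat \<Rightarrow> real" where
  "cf M e f j = integral\<^sup>L M (\<lambda>x. f x * e j x)"

definition ONS :: "'a measure \<Rightarrow> (nat \<Rightarrow> 'a \<Rightarrow> real) \<Rightarrow> bool" where
  "ONS M e \<longleftrightarrow> (\<forall>j. sq M (e j)) \<and> (\<forall>j k. integral\<^sup>L M (\<lambda>x. e j x * e k x) = (if j = k then 1 else 0))"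

lemma lin_sum:
  assumes "\<And>j. j \<in> A \<Longrightarrow> sq M (e j)" "sq M h"
  shows "integral\<^sup>L M (\<lambda>x. (\<Sum>j\<in>A. a j * e j x) * h x) = (\<Sum>j\<in>A. a j * integral\<^sup>L M (\<lambda>x. e j x * h x))"
proof -
  have "integral\<^sup>L M (\<lambda>x. (\<Sum>j\<in>A. a j * e j x) * h x) = integral\<^sup>L M (\<lambda>x. (\<Sum>j\<in>A. a j * (e j x * h x)))"
    by (simp add: sum_distrib_right mult.assoc)
  also have "\<dots> = (\<Sum>j\<in>A. integral\<^sup>L M (\<lambda>x. a j * (e j x * h x)))"
    by (rule Bochner_Integration.integral_sum[where f="\<lambda>j x. a j * (e j x * h x)"]) (use assms sq_mult_int in auto)
  also have "\<dots> = (\<Sum>j\<in>A. a j * integral\<^sup>L M (\<lambda>x. e j x * h x))" by simp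
  finally show ?thesis .
qed

lemma ons_sq: "ONS M e \<Longrightarrow> sq M (e j)" by (simp add: ONS_def)

lemma ons_sum_sq: "ONS M e \<Longrightarrow> sq M (\<lambda>x. \<Sum>j\<in>A. a j * e j x)"
  by (rule sq_sum, rule sq_cmult, rule ons_sq)

lemma cf_partial:
  assumes "ONS M e" "finite A"
  shows "integral\<^sup>L M (\<lambda>x. (\<Sum>j\<in>A. a j * e j x) * e k x) = (if k \<in> A then a k else 0)"
proof -
  have "integral\<^sup>L M (\<lambda>x. (\<Sum>j\<in>A. a j * e j x) * e k x) = (\<Sum>j\<in>A. a j * (if j = k then 1 else 0))"
    using lin_sum[of A M e "e k" a] assms by (simp add: ONS_def)
  also have "\<dots> = (if k \<in> A then a k else 0)"
    using assms(2) by (simp add: if_distrib sum.delta cong: if_cong)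
  finally show ?thesis .
qed

lemma norm_partial:
  assumes "ONS M e" "finite A"
  shows "integral\<^sup>L M (\<lambda>x. (\<Sum>j\<in>A. a j * e j x)^2) = (\<Sum>j\<in>A. (a j)^2)"
proof -
  have "integral\<^sup>L M (\<lambda>x. (\<Sum>j\<in>A. a j * e j x)^2) =
        integral\<^sup>L M (\<lambda>x. (\<Sum>j\<in>A. a j * e j x) * (\<Sum>j\<in>A. a j * e j x))"
    by (simp add: power2_eq_square)
  also have "\<dots> = (\<Sum>j\<in>A. a j * integral\<^sup>L M (\<lambda>x. e j x * (\<Sum>j\<in>A. a j * e j x)))"
    by (rule lin_sum) (use assms ons_sq ons_sum_sq in auto)
  also have "\<dots> = (\<Sum>j\<in>A. a j * a j)"
  proof (rule sum.cong)
    fix j assume "j \<in> A"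
    have "integral\<^sup>L M (\<lambda>x. e j x * (\<Sum>j\<in>A. a j * e j x)) = integral\<^sup>L M (\<lambda>x. (\<Sum>j\<in>A. a j * e j x) * e j x)"
      by (simp add: mult.commute)
    also have "\<dots> = a j" using cf_partial[OF assms, of a j] \<open>j \<in> A\<close> by simp
    finally show "a j * integral\<^sup>L M (\<lambda>x. e j x * (\<Sum>j\<in>A. a j * e j x)) = a j * a j" by simp
  qed simp
  finally show ?thesis by (simp add: power2_eq_square)
qed

definition complete_ons :: "'a measure \<Rightarrow> (nat \<Rightarrow> 'a \<Rightarrow> real) \<Rightarrow> bool" where
  "complete_ons M e \<longleftrightarrow> ONS M e \<and> (\<forall>f. sq M f \<longrightarrow>
     (\<lambda>n. integral\<^sup>L M (\<lambda>x. (f x - (\<Sum>j<n. cf M e f j * e j x))^2)) \<longlonglongrightarrow> 0)"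

lemma parseval:
  assumes "complete_ons M e" "sq M a" "sq M b"
  shows "(\<lambda>j. cf M e a j * cf M e b j) sums integral\<^sup>L M (\<lambda>x. a x * b x)"
proof -
  have O: "ONS M e" using assms by (simp add: complete_ons_def)
  define S where "S n x = (\<Sum>j<n. cf M e a j * e j x)" for n x
  have sqS: "sq M (S n)" for n unfolding S_def using ons_sum_sq[OF O] .
  have ps: "(\<Sum>j<n. cf M e a j * cf M e b j) = integral\<^sup>L M (\<lambda>x. S n x * b x)" for n
    unfolding S_def by (subst lin_sum) (use O assms ons_sq in \<open>auto simp: cf_def mult.commute\<close>)
  have c: "(\<lambda>n. integral\<^sup>L M (\<lambda>x. (S n x - a x)^2)) \<longlonglongrightarrow> 0"
  proof -
    have "(\<lambda>n. integral\<^sup>L M (\<lambda>x. (a x - S n x)^2)) \<longlonglongrightarrow> 0"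
      using assms unfolding complete_ons_def S_def by blast
    moreover have "(\<lambda>x. (a x - S n x)^2) = (\<lambda>x. (S n x - a x)^2)" for n
      by (simp add: power2_commute)
    ultimately show ?thesis by simp
  qed
  have "(\<lambda>n. integral\<^sup>L M (\<lambda>x. S n x * b x)) \<longlonglongrightarrow> integral\<^sup>L M (\<lambda>x. a x * b x)"
    by (rule sq_cont[OF sqS assms(2,3) c])
  then show ?thesis unfolding sums_def ps .
qed

lemma parseval_eq:
  assumes "complete_ons M e" "sq M a" "sq M b"
  shows "integral\<^sup>L M (\<lambda>x. a x * b x) = (\<Sum>j. cf M e a j * cf M e b j)"
  using parseval[OF assms] by (simp add: sums_iff)

lemma zero_coef_orth:
  assumes "complete_ons M e" "sq M h" "\<And>j. cf M e h j = 0" "sq M b"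
  shows "integral\<^sup>L M (\<lambda>x. h x * b x) = 0"
  using parseval_eq[OF assms(1,2,4)] assms(3) by simp

lemma sum_ivl_sq:
  fixes f :: "nat \<Rightarrow> real"
  assumes "m \<le> n"
  shows "(\<Sum>j<n. f j) - (\<Sum>j<m. f j) = (\<Sum>j\<in>{m..<n}. (f j::real))"
  using sum_diff_nat_ivl[of 0 m n f] assms by (simp add: atLeast0LessThan)

lemma riesz_fischer:
  assumes O: "ONS M e" and sm: "summable (\<lambda>j. (c j)^2)"
  shows "\<exists>g. sq M g \<and> (\<forall>j. cf M e g j = c j)"
proof -
  define S where "S n x = (\<Sum>j<n. c j * e j x)" for n x
  have sqS: "sq M (S n)" for n unfolding S_def using ons_sum_sq[OF O] .
  have [measurable]: "S n \<in> borel_measurable M" for n using sqS sq_meas by blast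
  define tl where "tl m = (\<Sum>j. (c j)^2) - (\<Sum>j<m. (c j)^2)" for m
  have tl0: "tl \<longlonglongrightarrow> 0"
  proof -
    have "(\<lambda>m. \<Sum>j<m. (c j)^2) \<longlonglongrightarrow> (\<Sum>j. (c j)^2)" using summable_LIMSEQ[OF sm] .
    then have "(\<lambda>m. (\<Sum>j. (c j)^2) - (\<Sum>j<m. (c j)^2)) \<longlonglongrightarrow> (\<Sum>j. (c j)^2) - (\<Sum>j. (c j)^2)"
      by (intro tendsto_intros)
    then show ?thesis unfolding tl_def by simp
  qed
  have dist: "integral\<^sup>L M (\<lambda>x. (S n x - S m x)^2) \<le> tl m" if "m \<le> n" for m n
  proof -
    have "\<And>x. S n x - S m x = (\<Sum>j\<in>{m..<n}. c j * e j x)"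
      unfolding S_def using sum_ivl_sq[OF that] by auto
    then have "integral\<^sup>L M (\<lambda>x. (S n x - S m x)^2) = integral\<^sup>L M (\<lambda>x. (\<Sum>j\<in>{m..<n}. c j * e j x)^2)"
      by simp
    also have "\<dots> = (\<Sum>j\<in>{m..<n}. (c j)^2)"
      using norm_partial[OF O, of "{m..<n}" c] by simp
    finally have "integral\<^sup>L M (\<lambda>x. (S n x - S m x)^2) = (\<Sum>j\<in>{m..<n}. (c j)^2)" .
    also have "\<dots> = (\<Sum>j<n. (c j)^2) - (\<Sum>j<m. (c j)^2)" using sum_ivl_sq[OF that] by simp
    also have "\<dots> \<le> tl m" unfolding tl_def
      using sum_le_suminf[OF sm, of "{..<n}"] by simp
    finally show ?thesis .
  qed
  have "\<forall>k. \<exists>n. \<forall>m\<ge>n. tl m < (1/8)^k"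
  proof
    fix k :: nat
    have "(0::real) < (1/8)^k" by simp
    from tl0[THEN order_tendstoD(2), OF this] show "\<exists>n. \<forall>m\<ge>n. tl m < (1/8)^k"
      by (simp add: eventually_sequentially)
  qed
  then obtain nn where nn: "\<And>k m. m \<ge> nn k \<Longrightarrow> tl m < (1/8)^k" by metis
  define N where "N k = (\<Sum>i\<le>k. nn i) + k" for k
  have N_nn: "nn k \<le> N k" for k unfolding N_def
    using member_le_sum[of k "{..k}" nn] by simp
  have N_mono: "N k \<le> N (Suc k)" for k unfolding N_def by simp
  have N_mono': "N k \<le> N l" if "k \<le> l" for k l
    using that by (induction l) (auto simp: le_Suc_eq intro: order.trans[OF _ N_mono])
  have N_ge: "k \<le> N k" for k unfolding N_def by simp
  have tlN: "tl (N k) < (1/8)^k" for k using nn N_nn by blast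
  define d where "d k x = S (N (Suc k)) x - S (N k) x" for k x
  have [measurable]: "d k \<in> borel_measurable M" for k unfolding d_def by measurable
  have dk: "integral\<^sup>L M (\<lambda>x. (d k x)^2) \<le> (1/8)^k" for k
    using dist[OF N_mono, of k] tlN[of k] unfolding d_def by simp
  have intd: "integrable M (\<lambda>x. (d k x)^2)" for k
    unfolding d_def using sq_diff[OF sqS sqS] by (simp add: sq_def)
  have sum4: "summable (\<lambda>k. 4^k * integral\<^sup>L M (\<lambda>x. (d k x)^2))"
  proof (rule summable_comparison_test_ev[where g="\<lambda>k. (1/2)^k"])
    show "summable (\<lambda>k. (1/2::real)^k)" by simp
    show "\<forall>\<^sub>F k in sequentially. norm (4^k * integral\<^sup>L M (\<lambda>x. (d k x)^2)) \<le> (1/2)^k"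
    proof (rule always_eventually, rule allI)
      fix k :: nat
      have "0 \<le> integral\<^sup>L M (\<lambda>x. (d k x)^2)" by simp
      then have "norm (4^k * integral\<^sup>L M (\<lambda>x. (d k x)^2)) = 4^k * integral\<^sup>L M (\<lambda>x. (d k x)^2)"
        by simp
      also have "\<dots> \<le> 4^k * (1/8)^k" by (rule mult_left_mono[OF dk]) simp
      also have "\<dots> = (4 * (1/8))^k" by (simp only: power_mult_distrib)
      also have "\<dots> = (1/2)^k" by simp
      finally show "norm (4^k * integral\<^sup>L M (\<lambda>x. (d k x)^2)) \<le> (1/2)^k" .
    qed
  qed
  have nnF: "(\<integral>\<^sup>+x. (\<Sum>k. ennreal (4^k * (d k x)^2)) \<partial>M) \<noteq> \<infinity>"
  proof -
    have "(\<integral>\<^sup>+x. (\<Sum>k. ennreal (4^k * (d k x)^2)) \<partial>M) = (\<Sum>k. \<integral>\<^sup>+x. ennreal (4^k * (d k x)^2) \<partial>M)"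
      by (rule nn_integral_suminf) measurable
    also have "\<dots> = (\<Sum>k. ennreal (4^k * integral\<^sup>L M (\<lambda>x. (d k x)^2)))"
    proof -
      have "(\<integral>\<^sup>+x. ennreal (4^k * (d k x)^2) \<partial>M) = ennreal (4^k * integral\<^sup>L M (\<lambda>x. (d k x)^2))" for k
        by (subst nn_integral_eq_integral) (use intd in auto)
      then show ?thesis by simp
    qed
    also have "\<dots> \<noteq> top" by (rule ennreal_suminf_neq_top[OF sum4]) simp
    finally show ?thesis by simp
  qed
  have "AE x in M. (\<Sum>k. ennreal (4^k * (d k x)^2)) \<noteq> \<infinity>"
    by (rule nn_integral_PInf_AE[OF _ nnF]) measurable
  then have AEconv: "AE x in M. convergent (\<lambda>k. S (N k) x)"
  proof (rule AE_mp, intro AE_I2 impI)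
    fix x assume fin: "(\<Sum>k. ennreal (4^k * (d k x)^2)) \<noteq> \<infinity>"
    have s: "summable (\<lambda>k. 4^k * (d k x)^2)"
      by (rule summable_suminf_not_top) (use fin in auto)
    then have "(\<lambda>k. 4^k * (d k x)^2) \<longlonglongrightarrow> 0" by (rule summable_LIMSEQ_zero)
    then have ev: "\<forall>\<^sub>F k in sequentially. 4^k * (d k x)^2 < 1"
      by (rule order_tendstoD) simp
    have "summable (\<lambda>k. d k x)"
    proof (rule summable_comparison_test_ev[where g="\<lambda>k. (1/2)^k"])
      show "summable (\<lambda>k. (1/2::real)^k)" by simp
      show "\<forall>\<^sub>F k in sequentially. norm (d k x) \<le> (1/2)^k"
      proof (rule eventually_mono[OF ev])
        fix k assume a: "4^k * (d k x)^2 < 1"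
        have p: "((2::real)^k)^2 = 4^k"
          by (simp only: power2_eq_square power_mult_distrib[symmetric]) simp
        have "(2^k * \<bar>d k x\<bar>)^2 = 4^k * (d k x)^2"
          by (simp only: power_mult_distrib p power2_abs)
        with a have "(2^k * \<bar>d k x\<bar>)^2 < 1^2" by simp
        then have "2^k * \<bar>d k x\<bar> < 1" by (rule power_less_imp_less_base) simp
        then show "norm (d k x) \<le> (1/2)^k" by (simp add: field_simps power_divide)
      qed
    qed
    then have "convergent (\<lambda>k. \<Sum>i<k. d i x)" by (simp add: summable_iff_convergent)
    moreover have "(\<lambda>k. S (N k) x) = (\<lambda>k. S (N 0) x + (\<Sum>i<k. d i x))"
      unfolding d_def by (subst sum_lessThan_telescope) simp
    ultimately show "convergent (\<lambda>k. S (N k) x)"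
      by (simp add: convergent_add convergent_const)
  qed
  define g where "g x = lim (\<lambda>k. S (N k) x)" for x
  have [measurable]: "g \<in> borel_measurable M" unfolding g_def by measurable
  have AEg: "AE x in M. (\<lambda>k. S (N k) x) \<longlonglongrightarrow> g x"
    using AEconv by eventually_elim (simp add: g_def convergent_LIMSEQ_iff)
  have bnd: "(\<integral>\<^sup>+x. ennreal ((g x - S (N k) x)^2) \<partial>M) \<le> ennreal (tl (N k))" for k
  proof -
    have "(\<integral>\<^sup>+x. ennreal ((g x - S (N k) x)^2) \<partial>M)
        = (\<integral>\<^sup>+x. liminf (\<lambda>l. ennreal ((S (N l) x - S (N k) x)^2)) \<partial>M)"
    proof (rule nn_integral_cong_AE)
      show "AE x in M. ennreal ((g x - S (N k) x)^2) = liminf (\<lambda>l. ennreal ((S (N l) x - S (N k) x)^2))"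
        using AEg
      proof eventually_elim
        case (elim x)
        have "(\<lambda>l. (S (N l) x - S (N k) x)^2) \<longlonglongrightarrow> (g x - S (N k) x)^2"
          by (intro tendsto_intros elim)
        then have "(\<lambda>l. ennreal ((S (N l) x - S (N k) x)^2)) \<longlonglongrightarrow> ennreal ((g x - S (N k) x)^2)"
          by (rule tendsto_ennrealI)
        from lim_imp_Liminf[OF _ this] show ?case by simp
      qed
    qed
    also have "\<dots> \<le> liminf (\<lambda>l. \<integral>\<^sup>+x. ennreal ((S (N l) x - S (N k) x)^2) \<partial>M)"
      by (rule nn_integral_liminf) measurable
    also have "\<dots> \<le> limsup (\<lambda>l. \<integral>\<^sup>+x. ennreal ((S (N l) x - S (N k) x)^2) \<partial>M)"
      by (rule Liminf_le_Limsup) simp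
    also have "\<dots> \<le> ennreal (tl (N k))"
    proof (rule Limsup_bounded)
      show "\<forall>\<^sub>F l in sequentially. (\<integral>\<^sup>+x. ennreal ((S (N l) x - S (N k) x)^2) \<partial>M) \<le> ennreal (tl (N k))"
        unfolding eventually_sequentially
      proof (intro exI allI impI)
        fix l assume "k \<le> l"
        then have kl: "N k \<le> N l" by (rule N_mono')
        have "(\<integral>\<^sup>+x. ennreal ((S (N l) x - S (N k) x)^2) \<partial>M) = ennreal (integral\<^sup>L M (\<lambda>x. (S (N l) x - S (N k) x)^2))"
          by (subst nn_integral_eq_integral) (use sq_diff[OF sqS sqS] in \<open>auto simp: sq_def\<close>)
        also have "\<dots> \<le> ennreal (tl (N k))" by (rule ennreal_leI, rule dist[OF kl])
        finally show "(\<integral>\<^sup>+x. ennreal ((S (N l) x - S (N k) x)^2) \<partial>M) \<le> ennreal (tl (N k))" .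
      qed
    qed
    finally show ?thesis .
  qed
  have intg: "integrable M (\<lambda>x. (g x - S (N k) x)^2)" for k
  proof (rule integrableI_bounded)
    show "(\<lambda>x. (g x - S (N k) x)^2) \<in> borel_measurable M" by measurable
    have "(\<integral>\<^sup>+x. ennreal (norm ((g x - S (N k) x)^2)) \<partial>M) = (\<integral>\<^sup>+x. ennreal ((g x - S (N k) x)^2) \<partial>M)"
      by simp
    also have "\<dots> < \<infinity>" using bnd[of k] by (simp add: le_less_trans)
    finally show "(\<integral>\<^sup>+x. ennreal (norm ((g x - S (N k) x)^2)) \<partial>M) < \<infinity>" .
  qed
  have sqg: "sq M g"
  proof -
    have "sq M (\<lambda>x. g x - S (N 0) x)" using intg[of 0] by (simp add: sq_def)
    from sq_add[OF this sqS[of "N 0"]] show ?thesis by simp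
  qed
  have le: "integral\<^sup>L M (\<lambda>x. (g x - S (N k) x)^2) \<le> tl (N k)" for k
  proof -
    have "ennreal (integral\<^sup>L M (\<lambda>x. (g x - S (N k) x)^2)) = (\<integral>\<^sup>+x. ennreal ((g x - S (N k) x)^2) \<partial>M)"
      by (subst nn_integral_eq_integral) (use intg in auto)
    also have "\<dots> \<le> ennreal (tl (N k))" by (rule bnd)
    finally have "ennreal (integral\<^sup>L M (\<lambda>x. (g x - S (N k) x)^2)) \<le> ennreal (tl (N k))" .
    moreover have "0 \<le> tl (N k)" using order.trans[OF _ dist[OF le_refl]] by (simp add: power2_eq_square) 
    ultimately show ?thesis by (simp add: ennreal_le_iff)
  qed
  have conv: "(\<lambda>k. integral\<^sup>L M (\<lambda>x. (S (N k) x - g x)^2)) \<longlonglongrightarrow> 0"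
  proof (rule Lim_null_comparison[where g="\<lambda>k. (1/8)^k"])
    show "(\<lambda>k. (1/8::real)^k) \<longlonglongrightarrow> 0" by (rule LIMSEQ_power_zero) simp
    show "\<forall>\<^sub>F k in sequentially. norm (integral\<^sup>L M (\<lambda>x. (S (N k) x - g x)^2)) \<le> (1/8)^k"
    proof (rule always_eventually, rule allI)
      fix k
      have "(\<lambda>x. (S (N k) x - g x)^2) = (\<lambda>x. (g x - S (N k) x)^2)" by (simp add: power2_commute)
      then show "norm (integral\<^sup>L M (\<lambda>x. (S (N k) x - g x)^2)) \<le> (1/8)^k"
        using le[of k] tlN[of k] by simp
    qed
  qed
  have "cf M e g j = c j" for j
  proof -
    have l1: "(\<lambda>k. integral\<^sup>L M (\<lambda>x. S (N k) x * e j x)) \<longlonglongrightarrow> integral\<^sup>L M (\<lambda>x. g x * e j x)"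
      by (rule sq_cont[OF sqS sqg ons_sq[OF O] conv])
    have "\<forall>\<^sub>F k in sequentially. integral\<^sup>L M (\<lambda>x. S (N k) x * e j x) = c j"
      unfolding eventually_sequentially
    proof (intro exI allI impI)
      fix k assume "Suc j \<le> k"
      then have "j \<in> {..<N k}" using N_ge[of k] by simp
      then show "integral\<^sup>L M (\<lambda>x. S (N k) x * e j x) = c j"
        unfolding S_def using cf_partial[OF O, of "{..<N k}" c j] by simp
    qed
    then have l2: "(\<lambda>k. integral\<^sup>L M (\<lambda>x. S (N k) x * e j x)) \<longlonglongrightarrow> c j"
      by (rule tendsto_eventually)
    show ?thesis unfolding cf_def using LIMSEQ_unique[OF l1 l2] .
  qed
  with sqg show ?thesis by blast
qed

lemma smooth_diff: "smooth f \<Longrightarrow> f differentiable (at x)"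
  by (erule smooth.cases) auto

lemma smooth_pd: "smooth f \<Longrightarrow> smooth (pd i f)"
  by (erule smooth.cases) auto

lemma smooth_cont: "smooth f \<Longrightarrow> continuous_on UNIV f"
  by (meson continuous_at_imp_continuous_on differentiable_imp_continuous_within smooth_diff)

lemma pd_eq: "(f has_derivative f') (at x) \<Longrightarrow> pd i f x = f' (axis i 1)"
  unfolding pd_def using frechet_derivative_at by metis

lemma fd_works: "f differentiable (at x) \<Longrightarrow> (f has_derivative frechet_derivative f (at x)) (at x)"
  by (simp add: frechet_derivative_works)

lemma smooth_add: fixes f g :: "'n::finite fn" assumes "smooth f" "smooth g" shows "smooth (\<lambda>x. f x + g x)"
proof -
  define Q where "Q h \<longleftrightarrow> (\<exists>f g. smooth f \<and> smooth g \<and> h = (\<lambda>x. f x + g x))" for h :: "'n fn"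
  have "Q (\<lambda>x. f x + g x)" using assms Q_def by blast
  then show ?thesis
  proof (rule smooth.coinduct[where X=Q])
    fix h assume "Q h"
    then obtain f g where fg: "smooth f" "smooth g" "h = (\<lambda>x. f x + g x)" unfolding Q_def by blast
    have d: "(h has_derivative (\<lambda>v. frechet_derivative f (at x) v + frechet_derivative g (at x) v)) (at x)" for x
      unfolding fg(3) by (intro has_derivative_add fd_works smooth_diff fg)
    have "pd i h = (\<lambda>x. pd i f x + pd i g x)" for i
      using pd_eq[OF d] pd_eq[OF fd_works[OF smooth_diff[OF fg(1)]]] pd_eq[OF fd_works[OF smooth_diff[OF fg(2)]]]
      by (auto simp: fun_eq_iff)
    then have "Q (pd i h)" for i unfolding Q_def using fg smooth_pd by blast
    moreover have "h differentiable (at x)" for x using d differentiableI by blast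
    ultimately show "\<exists>f. h = f \<and> (\<forall>x. f differentiable at x) \<and> (\<forall>i. Q (pd i f) \<or> smooth (pd i f))" by blast
  qed
qed

lemma sum_double: "(\<Sum>j<2*(n::nat). h j) = (\<Sum>j<n. h (2*j) + h (2*j+1)::real)"
  by (induction n) (auto simp: sum.lessThan_Suc)

lemma smooth_mult: fixes f g :: "'n::finite fn" assumes "smooth f" "smooth g" shows "smooth (\<lambda>x. f x * g x)"
proof -
  define Q where "Q h \<longleftrightarrow> (\<exists>(n::nat) F G. (\<forall>j<n. smooth (F j) \<and> smooth (G j)) \<and> h = (\<lambda>x. \<Sum>j<n. F j x * G j x))"
    for h :: "'n fn"
  have "Q (\<lambda>x. f x * g x)" unfolding Q_def
  proof (intro exI conjI)
    show "\<forall>j<(1::nat). smooth ((\<lambda>_. f) j) \<and> smooth ((\<lambda>_. g) j)" using assms by simp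
    show "(\<lambda>x. f x * g x) = (\<lambda>x. \<Sum>j<(1::nat). (\<lambda>_. f) j x * (\<lambda>_. g) j x)" by simp
  qed
  then show ?thesis
  proof (rule smooth.coinduct[where X=Q])
    fix h assume "Q h"
    then obtain n :: nat and F G where FG: "\<forall>j<n. smooth (F j) \<and> smooth (G j)" "h = (\<lambda>x. \<Sum>j<n. F j x * G j x)"
      unfolding Q_def by blast
    have d: "(h has_derivative (\<lambda>v. \<Sum>j<n. F j x * frechet_derivative (G j) (at x) v + frechet_derivative (F j) (at x) v * G j x)) (at x)" for x
      unfolding FG(2)
      by (intro has_derivative_sum has_derivative_mult fd_works smooth_diff) (use FG(1) in auto)
    have "Q (pd i h)" for i
    proof -
      define F' where "F' j = (if even j then pd i (F (j div 2)) else F (j div 2))" for j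
      define G' where "G' j = (if even j then G (j div 2) else pd i (G (j div 2)))" for j
      have "pd i h x = (\<Sum>j<n. F j x * pd i (G j) x + pd i (F j) x * G j x)" for x
        using pd_eq[OF d, of i x] unfolding pd_def[of i "G _"] pd_def[of i "F _"] by simp
      also have "\<dots> x = (\<Sum>j<2*n. F' j x * G' j x)" for x
        unfolding sum_double F'_def G'_def by (auto intro!: sum.cong)
      finally have "pd i h = (\<lambda>x. \<Sum>j<2*n. F' j x * G' j x)" by auto
      moreover have "\<forall>j<2*n. smooth (F' j) \<and> smooth (G' j)"
      proof -
        have hd: "j div 2 < n" if "j < 2*n" for j using that by presburger
        show ?thesis unfolding F'_def G'_def using FG(1) smooth_pd hd by auto
      qed
      ultimately show ?thesis unfolding Q_def by blast
    qed
    moreover have "h differentiable (at x)" for x using d differentiableI by blast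
    ultimately show "\<exists>f. h = f \<and> (\<forall>x. f differentiable at x) \<and> (\<forall>i. Q (pd i f) \<or> smooth (pd i f))" by blast
  qed
qed

lemma pd_mult: assumes "smooth f" "smooth g"
  shows "pd i (\<lambda>x. f x * g x) x = pd i f x * g x + f x * pd i g x"
proof -
  have "((\<lambda>x. f x * g x) has_derivative (\<lambda>v. f x * frechet_derivative g (at x) v + frechet_derivative f (at x) v * g x)) (at x)"
    by (intro has_derivative_mult fd_works smooth_diff assms)
  from pd_eq[OF this] show ?thesis using pd_eq[OF fd_works[OF smooth_diff[OF assms(1)]]]
      pd_eq[OF fd_works[OF smooth_diff[OF assms(2)]]] by simp
qed

lemma pd_zero_out:
  assumes "x \<notin> closure {y. f y \<noteq> 0}"
  shows "pd i f x = 0"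
proof -
  let ?S = "- closure {y. f y \<noteq> 0}"
  have "((\<lambda>_. 0::real) has_derivative (\<lambda>_. 0)) (at x)" by (rule has_derivative_const)
  then have "(f has_derivative (\<lambda>_. 0)) (at x)"
  proof (rule has_derivative_transform_within_open[of _ _ _ _ ?S])
    fix y assume "y \<in> ?S"
    then have "y \<notin> {y. f y \<noteq> 0}" using closure_subset[of "{y. f y \<noteq> 0}"] by blast
    then show "0 = f y" by simp
  next
    show "open ?S" by (rule open_Compl) (rule closed_closure)
    show "x \<in> ?S" using assms by simp
  qed
  from pd_eq[OF this] show ?thesis .
qed

lemma test_fun_pd: assumes "test_fun \<Omega> \<phi>" shows "test_fun \<Omega> (pd i \<phi>)"
proof -
  have sub: "closure {x. pd i \<phi> x \<noteq> 0} \<subseteq> closure {x. \<phi> x \<noteq> 0}"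
  proof (rule closure_minimal)
    show "{x. pd i \<phi> x \<noteq> 0} \<subseteq> closure {x. \<phi> x \<noteq> 0}" using pd_zero_out by blast
  qed simp
  have "compact (closure {x. \<phi> x \<noteq> 0} \<inter> closure {x. pd i \<phi> x \<noteq> 0})"
    by (rule compact_Int_closed) (use assms in \<open>simp_all add: test_fun_def\<close>)
  then have "compact (closure {x. pd i \<phi> x \<noteq> 0})" using sub by (simp add: Int_absorb1)
  then show ?thesis using assms sub smooth_pd unfolding test_fun_def by blast
qed

lemma test_fun_mult: assumes "test_fun \<Omega> \<phi>" "smooth g" shows "test_fun \<Omega> (\<lambda>x. \<phi> x * g x)"
proof -
  have sub: "closure {x. \<phi> x * g x \<noteq> 0} \<subseteq> closure {x. \<phi> x \<noteq> 0}"
    by (rule closure_mono) auto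
  have "compact (closure {x. \<phi> x \<noteq> 0} \<inter> closure {x. \<phi> x * g x \<noteq> 0})"
    by (rule compact_Int_closed) (use assms in \<open>simp_all add: test_fun_def\<close>)
  then have "compact (closure {x. \<phi> x * g x \<noteq> 0})" using sub by (simp add: Int_absorb1)
  moreover have "smooth (\<lambda>x. \<phi> x * g x)" using assms(1) unfolding test_fun_def
    by (intro smooth_mult assms(2)) simp
  moreover have "closure {x. \<phi> x * g x \<noteq> 0} \<subseteq> \<Omega>" using sub assms(1) unfolding test_fun_def by (meson order_trans)
  ultimately show ?thesis unfolding test_fun_def by simp
qed

lemma test_fun_bounded: assumes "test_fun \<Omega> \<phi>" shows "\<exists>B. \<forall>x. \<bar>\<phi> x\<bar> \<le> B"
proof -
  let ?K = "closure {x. \<phi> x \<noteq> 0}"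
  have "compact (\<phi> ` ?K)"
    by (rule compact_continuous_image) (use assms continuous_on_subset[OF smooth_cont subset_UNIV] in \<open>auto simp: test_fun_def\<close>)
  then have "bounded (\<phi> ` ?K)" by (rule compact_imp_bounded)
  then obtain B where B: "\<And>y. y \<in> \<phi> ` ?K \<Longrightarrow> norm y \<le> B"
    unfolding bounded_iff by blast
  have "\<bar>\<phi> x\<bar> \<le> max B 0" for x
  proof (cases "x \<in> ?K")
    case True then show ?thesis using B[of "\<phi> x"] by auto
  next
    case False then have "\<phi> x = 0" using closure_subset[of "{x. \<phi> x \<noteq> 0}"] by blast
    then show ?thesis by simp
  qed
  then show ?thesis by blast
qed

lemma line_deriv:
  fixes f :: "'a::real_normed_vector \<Rightarrow> real"
  assumes "f differentiable (at (y + t *\<^sub>R v))"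
  shows "((\<lambda>s. f (y + s *\<^sub>R v)) has_real_derivative frechet_derivative f (at (y + t *\<^sub>R v)) v) (at t)"
proof -
  let ?F = "frechet_derivative f (at (y + t *\<^sub>R v))"
  have l: "((\<lambda>s. y + s *\<^sub>R v) has_derivative (\<lambda>s. s *\<^sub>R v)) (at t)"
    by (intro derivative_eq_intros) auto
  have fd: "(f has_derivative ?F) (at (y + t *\<^sub>R v))" using assms by (rule fd_works)
  have "((\<lambda>s. f (y + s *\<^sub>R v)) has_derivative (\<lambda>s. ?F (s *\<^sub>R v))) (at t)"
    using has_derivative_compose[OF l fd] by simp
  moreover have "(\<lambda>s. ?F (s *\<^sub>R v)) = (\<lambda>s. ?F v * s)"
    using linear_cmul[OF bounded_linear.linear[OF has_derivative_bounded_linear[OF fd]]] by (auto simp: mult.commute)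
  ultimately show ?thesis by (simp add: has_field_derivative_def)
qed

lemma delta_lemma:
  fixes f :: "'a::real_normed_vector \<Rightarrow> real"
  assumes df: "\<And>y. f differentiable (at y)"
    and dg: "\<And>y. (\<lambda>z. frechet_derivative f (at z) w) differentiable (at y)"
    and h: "0 < h"
  shows "\<exists>\<sigma> \<tau>. 0 < \<sigma> \<and> \<sigma> < h \<and> 0 < \<tau> \<and> \<tau> < h \<and>
     f (x + h *\<^sub>R v + h *\<^sub>R w) - f (x + h *\<^sub>R v) - f (x + h *\<^sub>R w) + f x
       = h * h * frechet_derivative (\<lambda>z. frechet_derivative f (at z) w) (at (x + \<sigma> *\<^sub>R v + \<tau> *\<^sub>R w)) v"
proof -
  define g where "g z = frechet_derivative f (at z) w" for z
  define u where "u t = f ((x + h *\<^sub>R v) + t *\<^sub>R w) - f (x + t *\<^sub>R w)" for t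
  have du: "(u has_real_derivative (g ((x + h *\<^sub>R v) + t *\<^sub>R w) - g (x + t *\<^sub>R w))) (at t)" for t
    unfolding u_def g_def by (intro DERIV_diff line_deriv df)
  obtain \<tau> where \<tau>: "0 < \<tau>" "\<tau> < h" "u h - u 0 = (h - 0) * (g ((x + h *\<^sub>R v) + \<tau> *\<^sub>R w) - g (x + \<tau> *\<^sub>R w))"
    using MVT2[OF h du] by blast
  define vv where "vv s = g ((x + \<tau> *\<^sub>R w) + s *\<^sub>R v)" for s
  have dv: "(vv has_real_derivative frechet_derivative g (at ((x + \<tau> *\<^sub>R w) + s *\<^sub>R v)) v) (at s)" for s
    unfolding vv_def by (rule line_deriv) (use dg in \<open>simp add: g_def\<close>)
  obtain \<sigma> where \<sigma>: "0 < \<sigma>" "\<sigma> < h" "vv h - vv 0 = (h - 0) * frechet_derivative g (at ((x + \<tau> *\<^sub>R w) + \<sigma> *\<^sub>R v)) v"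
    using MVT2[OF h dv] by blast
  have e1: "(x + h *\<^sub>R v) + \<tau> *\<^sub>R w = (x + \<tau> *\<^sub>R w) + h *\<^sub>R v" by (simp add: algebra_simps)
  have "f (x + h *\<^sub>R v + h *\<^sub>R w) - f (x + h *\<^sub>R v) - f (x + h *\<^sub>R w) + f x = u h - u 0"
    unfolding u_def by simp
  also have "\<dots> = h * (vv h - vv 0)" using \<tau>(3) unfolding vv_def e1 by simp
  also have "\<dots> = h * h * frechet_derivative g (at (x + \<sigma> *\<^sub>R v + \<tau> *\<^sub>R w)) v"
    using \<sigma>(3) by (simp add: algebra_simps)
  finally show ?thesis using \<sigma> \<tau> unfolding g_def by blast
qed

lemma pd_symm:
  fixes \<phi> :: "'n::finite fn"
  assumes "smooth \<phi>"
  shows "pd i (pd k \<phi>) x = pd k (pd i \<phi>) x"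
proof -
  let ?v = "axis i (1::real)" and ?w = "axis k (1::real)"
  have pdk: "pd k \<phi> = (\<lambda>z. frechet_derivative \<phi> (at z) ?w)" by (auto simp: pd_def fun_eq_iff)
  have pdi: "pd i \<phi> = (\<lambda>z. frechet_derivative \<phi> (at z) ?v)" by (auto simp: pd_def fun_eq_iff)
  have df: "\<And>y. \<phi> differentiable (at y)" using assms by (rule smooth_diff)
  have dgk: "\<And>y. (\<lambda>z. frechet_derivative \<phi> (at z) ?w) differentiable (at y)"
    using smooth_diff[OF smooth_pd[OF assms, of k]] pdk by simp
  have dgi: "\<And>y. (\<lambda>z. frechet_derivative \<phi> (at z) ?v) differentiable (at y)"
    using smooth_diff[OF smooth_pd[OF assms, of i]] pdi by simp
  define h where "h n = 1 / (real n + 1)" for n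
  have hpos: "0 < h n" for n unfolding h_def by simp
  have h0: "h \<longlonglongrightarrow> 0" unfolding h_def using LIMSEQ_inverse_real_of_nat by (simp add: inverse_eq_divide add.commute)
  define R where "R n q \<longleftrightarrow> (let s = q (0::nat); t = q 1; s' = q 2; t' = q 3 in 0 < s \<and> s < h n \<and> 0 < t \<and> t < h n \<and> 0 < s' \<and> s' < h n \<and> 0 < t' \<and> t' < h n \<and>
      pd i (pd k \<phi>) (x + s *\<^sub>R ?v + t *\<^sub>R ?w) = pd k (pd i \<phi>) (x + s' *\<^sub>R ?w + t' *\<^sub>R ?v))" for n q
  have "\<forall>n. \<exists>q. R n q"
  proof
    fix n
    obtain s t where st: "0 < s" "s < h n" "0 < t" "t < h n"
      "\<phi> (x + h n *\<^sub>R ?v + h n *\<^sub>R ?w) - \<phi> (x + h n *\<^sub>R ?v) - \<phi> (x + h n *\<^sub>R ?w) + \<phi> x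
       = h n * h n * frechet_derivative (\<lambda>z. frechet_derivative \<phi> (at z) ?w) (at (x + s *\<^sub>R ?v + t *\<^sub>R ?w)) ?v"
      using delta_lemma[OF df dgk hpos[of n], of x ?v] by blast
    obtain s' t' where st': "0 < s'" "s' < h n" "0 < t'" "t' < h n"
      "\<phi> (x + h n *\<^sub>R ?w + h n *\<^sub>R ?v) - \<phi> (x + h n *\<^sub>R ?w) - \<phi> (x + h n *\<^sub>R ?v) + \<phi> x
       = h n * h n * frechet_derivative (\<lambda>z. frechet_derivative \<phi> (at z) ?v) (at (x + s' *\<^sub>R ?w + t' *\<^sub>R ?v)) ?w"
      using delta_lemma[OF df dgi hpos[of n], of x ?w] by blast
    have "x + h n *\<^sub>R ?w + h n *\<^sub>R ?v = x + h n *\<^sub>R ?v + h n *\<^sub>R ?w" by (simp add: algebra_simps)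
    then have ee: "\<phi> (x + h n *\<^sub>R ?w + h n *\<^sub>R ?v) = \<phi> (x + h n *\<^sub>R ?v + h n *\<^sub>R ?w)" by (rule arg_cong)
    have "h n * h n * frechet_derivative (\<lambda>z. frechet_derivative \<phi> (at z) ?w) (at (x + s *\<^sub>R ?v + t *\<^sub>R ?w)) ?v
        = h n * h n * frechet_derivative (\<lambda>z. frechet_derivative \<phi> (at z) ?v) (at (x + s' *\<^sub>R ?w + t' *\<^sub>R ?v)) ?w"
      using st(5) st'(5) ee by linarith
    then have "frechet_derivative (\<lambda>z. frechet_derivative \<phi> (at z) ?w) (at (x + s *\<^sub>R ?v + t *\<^sub>R ?w)) ?v
        = frechet_derivative (\<lambda>z. frechet_derivative \<phi> (at z) ?v) (at (x + s' *\<^sub>R ?w + t' *\<^sub>R ?v)) ?w"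
      using hpos[of n] by simp
    then have "pd i (pd k \<phi>) (x + s *\<^sub>R ?v + t *\<^sub>R ?w) = pd k (pd i \<phi>) (x + s' *\<^sub>R ?w + t' *\<^sub>R ?v)"
      unfolding pdk pdi by (simp add: pd_def)
    then have "R n (\<lambda>j. if j = 0 then s else if j = 1 then t else if j = 2 then s' else t')"
      using st st' unfolding R_def by simp
    then show "\<exists>q. R n q" by blast
  qed
  then obtain Q where Q0: "\<forall>n. R n (Q n)" by (rule choice[THEN exE])
  then have Q: "R n (Q n)" for n by blast
  define s where "s n = Q n 0" for n
  define t where "t n = Q n 1" for n
  define s' where "s' n = Q n 2" for n
  define t' where "t' n = Q n 3" for n
  have H: "0 < s n \<and> s n < h n \<and> 0 < t n \<and> t n < h n \<and> 0 < s' n \<and> s' n < h n \<and> 0 < t' n \<and> t' n < h n \<and>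
      pd i (pd k \<phi>) (x + s n *\<^sub>R ?v + t n *\<^sub>R ?w) = pd k (pd i \<phi>) (x + s' n *\<^sub>R ?w + t' n *\<^sub>R ?v)" for n
    using Q[of n] unfolding R_def s_def t_def s'_def t'_def Let_def by simp
  have sq0: "q \<longlonglongrightarrow> 0" if "\<And>n. 0 < q n \<and> q n < h n" for q :: "nat \<Rightarrow> real"
  proof (rule real_tendsto_sandwich[of "\<lambda>_. 0" _ _ h])
    show "\<forall>\<^sub>F n in sequentially. 0 \<le> q n" using that by (simp add: less_imp_le)
    show "\<forall>\<^sub>F n in sequentially. q n \<le> h n" using that by (simp add: less_imp_le)
  qed (use h0 in auto)
  have s0: "s \<longlonglongrightarrow> 0" "t \<longlonglongrightarrow> 0" "s' \<longlonglongrightarrow> 0" "t' \<longlonglongrightarrow> 0"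
    using sq0[of s] sq0[of t] sq0[of s'] sq0[of t'] H by simp_all
  have p1: "(\<lambda>n. x + s n *\<^sub>R ?v + t n *\<^sub>R ?w) \<longlonglongrightarrow> x"
    using tendsto_add[OF tendsto_add[OF tendsto_const tendsto_scaleR[OF s0(1) tendsto_const]] tendsto_scaleR[OF s0(2) tendsto_const]]
    by simp
  have p2: "(\<lambda>n. x + s' n *\<^sub>R ?w + t' n *\<^sub>R ?v) \<longlonglongrightarrow> x"
    using tendsto_add[OF tendsto_add[OF tendsto_const tendsto_scaleR[OF s0(3) tendsto_const]] tendsto_scaleR[OF s0(4) tendsto_const]]
    by simp
  have c1: "isCont (pd i (pd k \<phi>)) x"
    using smooth_cont[OF smooth_pd[OF smooth_pd[OF assms]]] unfolding continuous_on_eq_continuous_at[OF open_UNIV] by blast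
  have c2: "isCont (pd k (pd i \<phi>)) x"
    using smooth_cont[OF smooth_pd[OF smooth_pd[OF assms]]] unfolding continuous_on_eq_continuous_at[OF open_UNIV] by blast
  have l1: "(\<lambda>n. pd i (pd k \<phi>) (x + s n *\<^sub>R ?v + t n *\<^sub>R ?w)) \<longlonglongrightarrow> pd i (pd k \<phi>) x"
    by (rule isCont_tendsto_compose[OF c1 p1])
  have l2: "(\<lambda>n. pd k (pd i \<phi>) (x + s' n *\<^sub>R ?w + t' n *\<^sub>R ?v)) \<longlonglongrightarrow> pd k (pd i \<phi>) x"
    by (rule isCont_tendsto_compose[OF c2 p2])
  have "(\<lambda>n. pd i (pd k \<phi>) (x + s n *\<^sub>R ?v + t n *\<^sub>R ?w)) = (\<lambda>n. pd k (pd i \<phi>) (x + s' n *\<^sub>R ?w + t' n *\<^sub>R ?v))"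
    using H by (simp add: fun_eq_iff)
  with l1 have "(\<lambda>n. pd k (pd i \<phi>) (x + s' n *\<^sub>R ?w + t' n *\<^sub>R ?v)) \<longlonglongrightarrow> pd i (pd k \<phi>) x" by simp
  from LIMSEQ_unique[OF this l2] show ?thesis .
qed

lemma cont_meas_leb: "continuous_on UNIV (g::'a::euclidean_space \<Rightarrow> real) \<Longrightarrow> g \<in> borel_measurable lebesgue"
proof -
  assume "continuous_on UNIV g"
  then have "g \<in> borel_measurable borel" by (rule borel_measurable_continuous_onI)
  then have "g \<in> borel_measurable lborel" unfolding measurable_lborel2 .
  then show "g \<in> borel_measurable lebesgue" by (rule measurable_completion)
qed

locale setting =
  fixes \<Omega> :: "(real^'n::finite) set" and w :: "nat \<Rightarrow> 'n fn" and lam :: "nat \<Rightarrow> real"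
  assumes dom: "smooth_bounded_domain \<Omega>" and DE: "dirichlet_eigenbasis \<Omega> w lam"
begin

definition N where "N = restrict_space lebesgue \<Omega>"

lemma om_open: "open \<Omega>" and om_bdd: "bounded \<Omega>"
  using dom by (auto simp: smooth_bounded_domain_def)

lemma om_sets: "\<Omega> \<in> sets lebesgue"
  using fmeasurableD[OF lmeasurable_open[OF om_bdd om_open]] .

lemma om_sets': "\<Omega> \<inter> space lebesgue \<in> sets lebesgue" by (subst sets.Int_space_eq2[OF om_sets]) (rule om_sets)

lemma int_eq: "integ \<Omega> f = integral\<^sup>L N f"
  unfolding integ_def N_def set_lebesgue_integral_def by (rule integral_restrict_space[OF om_sets', symmetric])

lemma L2_eq: "L2 \<Omega> f \<longleftrightarrow> sq N f"
  unfolding L2_def sq_def N_def set_borel_measurable_def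
    borel_measurable_restrict_space_iff[OF om_sets'] set_integrable_eq[OF om_sets'] ..

lemma fin: "finite_measure N"
proof (rule finite_measureI)
  have "space N = \<Omega>" unfolding N_def by (simp add: space_restrict_space)
  then have "emeasure N (space N) = emeasure lebesgue \<Omega>"
    unfolding N_def using emeasure_restrict_space[OF om_sets'] by simp
  also have "\<dots> \<noteq> \<infinity>"
  proof -
    have "\<Omega> \<in> fmeasurable lebesgue" using lmeasurable_open[OF om_bdd om_open] .
    then have "emeasure lebesgue \<Omega> < \<infinity>" unfolding fmeasurable_def by blast
    then show ?thesis by (rule less_imp_neq)
  qed
  finally show "emeasure N (space N) \<noteq> \<infinity>" .
qed

lemma cont_meas: "continuous_on UNIV (g::'n fn) \<Longrightarrow> g \<in> borel_measurable N"
  unfolding N_def using measurable_restrict_space1[OF cont_meas_leb] by blast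

lemma smooth_meas: "smooth (g::'n fn) \<Longrightarrow> g \<in> borel_measurable N"
  by (rule cont_meas, rule smooth_cont)

lemma test_sq: "test_fun \<Omega> \<phi> \<Longrightarrow> sq N \<phi>"
  using test_fun_bounded[of \<Omega> \<phi>] sq_bounded_fin[OF fin smooth_meas]
  unfolding test_fun_def by blast

lemma coef_eq: "coef \<Omega> w f j = cf N w f j"
  unfolding coef_def cf_def int_eq ..

lemma H01_H1: "H01 \<Omega> f \<Longrightarrow> H1 \<Omega> f" by (simp add: H01_def)

lemma H1_L2: "H1 \<Omega> f \<Longrightarrow> sq N f" by (simp add: H1_def L2_eq)

lemma wpd_weak: "H1 \<Omega> f \<Longrightarrow> weak_pd \<Omega> i f (wpd \<Omega> i f)"
  unfolding H1_def wpd_def by (metis someI_ex)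

lemma weak_sq: "weak_pd \<Omega> i f g \<Longrightarrow> sq N g"
  by (simp add: weak_pd_def L2_eq)

lemma wpd_sq: "H1 \<Omega> f \<Longrightarrow> sq N (wpd \<Omega> i f)"
  using wpd_weak weak_sq by blast

lemma w_H01: "H01 \<Omega> (w j)" using DE by (simp add: dirichlet_eigenbasis_def)

lemma w_sq: "sq N (w j)" using w_H01 H01_H1 H1_L2 by blast

lemma CO: "complete_ons N w"
  unfolding complete_ons_def ONS_def
proof (intro conjI allI impI)
  show "sq N (w j)" for j by (rule w_sq)
  show "integral\<^sup>L N (\<lambda>x. w j x * w k x) = (if j = k then 1 else 0)" for j k
    using DE by (simp add: dirichlet_eigenbasis_def int_eq)
  show "(\<lambda>n. integral\<^sup>L N (\<lambda>x. (f x - (\<Sum>j<n. cf N w f j * w j x))\<^sup>2)) \<longlonglongrightarrow> 0" if "sq N f" for f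
    using DE that by (simp add: dirichlet_eigenbasis_def int_eq L2_eq coef_eq)
qed

lemma ONS_w: "ONS N w" using CO by (simp add: complete_ons_def)

end

lemma sq_cont2:
  assumes "\<And>n. sq M (f n)" "sq M h" "sq M g"
    and "(\<lambda>n. integral\<^sup>L M (\<lambda>x. (h x - f n x)^2)) \<longlonglongrightarrow> 0"
  shows "(\<lambda>n. integral\<^sup>L M (\<lambda>x. g x * f n x)) \<longlonglongrightarrow> integral\<^sup>L M (\<lambda>x. g x * h x)"
proof -
  have "(\<lambda>n. integral\<^sup>L M (\<lambda>x. (f n x - h x)^2)) \<longlonglongrightarrow> 0"
    using assms(4) by (simp add: power2_commute)
  from sq_cont[OF assms(1-3) this] show ?thesis by (simp add: mult.commute)
qed

context setting
begin

lemma H01_seq: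
  assumes "H01 \<Omega> f"
  shows "\<exists>ch. (\<forall>m. test_fun \<Omega> (ch m)) \<and> (\<lambda>m. integral\<^sup>L N (\<lambda>x. (f x - ch m x)^2)) \<longlonglongrightarrow> 0 \<and>
     (\<forall>i. (\<lambda>m. integral\<^sup>L N (\<lambda>x. (wpd \<Omega> i f x - pd i (ch m) x)^2)) \<longlonglongrightarrow> 0)"
  using assms unfolding H01_def int_eq by blast

lemma eig: "test_fun \<Omega> \<phi> \<Longrightarrow>
  (\<Sum>i\<in>UNIV. integral\<^sup>L N (\<lambda>x. wpd \<Omega> i (w j) x * pd i \<phi> x)) = lam j * integral\<^sup>L N (\<lambda>x. w j x * \<phi> x)"
  using DE unfolding dirichlet_eigenbasis_def int_eq by blast

lemma wpdw_sq: "sq N (wpd \<Omega> i (w j))"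
  using wpd_sq H01_H1 w_H01 by blast

lemma ext_eig:
  assumes T: "\<And>m. test_fun \<Omega> (ch m)" and f: "sq N f" and G: "\<And>i. sq N (G i)"
    and cf: "(\<lambda>m. integral\<^sup>L N (\<lambda>x. (f x - ch m x)^2)) \<longlonglongrightarrow> 0"
    and cG: "\<And>i. (\<lambda>m. integral\<^sup>L N (\<lambda>x. (G i x - pd i (ch m) x)^2)) \<longlonglongrightarrow> 0"
  shows "(\<Sum>i\<in>UNIV. integral\<^sup>L N (\<lambda>x. wpd \<Omega> i (w j) x * G i x)) = lam j * integral\<^sup>L N (\<lambda>x. w j x * f x)"
proof -
  have L: "(\<lambda>m. \<Sum>i\<in>UNIV. integral\<^sup>L N (\<lambda>x. wpd \<Omega> i (w j) x * pd i (ch m) x))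
      \<longlonglongrightarrow> (\<Sum>i\<in>UNIV. integral\<^sup>L N (\<lambda>x. wpd \<Omega> i (w j) x * G i x))"
    by (intro tendsto_sum sq_cont2[OF test_sq[OF test_fun_pd[OF T]] G wpdw_sq cG])
  have R: "(\<lambda>m. lam j * integral\<^sup>L N (\<lambda>x. w j x * ch m x)) \<longlonglongrightarrow> lam j * integral\<^sup>L N (\<lambda>x. w j x * f x)"
    by (intro tendsto_mult tendsto_const sq_cont2[OF test_sq[OF T] f w_sq cf])
  have "(\<lambda>m. \<Sum>i\<in>UNIV. integral\<^sup>L N (\<lambda>x. wpd \<Omega> i (w j) x * pd i (ch m) x)) = (\<lambda>m. lam j * integral\<^sup>L N (\<lambda>x. w j x * ch m x))"
    using eig[OF T] by simp
  with L have "(\<lambda>m. lam j * integral\<^sup>L N (\<lambda>x. w j x * ch m x))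
      \<longlonglongrightarrow> (\<Sum>i\<in>UNIV. integral\<^sup>L N (\<lambda>x. wpd \<Omega> i (w j) x * G i x))" by simp
  from LIMSEQ_unique[OF this R] show ?thesis .
qed

lemma ext_eig_H01:
  assumes "H01 \<Omega> f"
  shows "(\<Sum>i\<in>UNIV. integral\<^sup>L N (\<lambda>x. wpd \<Omega> i (w j) x * wpd \<Omega> i f x)) = lam j * integral\<^sup>L N (\<lambda>x. w j x * f x)"
proof -
  obtain ch where ch: "\<forall>m. test_fun \<Omega> (ch m)" "(\<lambda>m. integral\<^sup>L N (\<lambda>x. (f x - ch m x)^2)) \<longlonglongrightarrow> 0"
     "\<forall>i. (\<lambda>m. integral\<^sup>L N (\<lambda>x. (wpd \<Omega> i f x - pd i (ch m) x)^2)) \<longlonglongrightarrow> 0"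
    using H01_seq[OF assms] by blast
  show ?thesis
    by (rule ext_eig[of ch]) (use ch assms H01_H1 H1_L2 wpd_sq in auto)
qed

lemma grad_orth:
  "(\<Sum>i\<in>UNIV. integral\<^sup>L N (\<lambda>x. wpd \<Omega> i (w j) x * wpd \<Omega> i (w k) x)) = lam j * (if j = k then 1 else 0)"
  using ext_eig_H01[OF w_H01[of k], of j] ONS_w unfolding ONS_def by simp

lemma lam_nonneg: "0 \<le> lam j"
proof -
  have "lam j = (\<Sum>i\<in>UNIV. integral\<^sup>L N (\<lambda>x. wpd \<Omega> i (w j) x * wpd \<Omega> i (w j) x))"
    using grad_orth[of j j] by simp
  also have "\<dots> \<ge> 0" by (intro sum_nonneg integral_nonneg_AE) auto
  finally show ?thesis by simp
qed

lemma uniq: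
  assumes h: "sq N h" and z: "\<And>ch. test_fun \<Omega> ch \<Longrightarrow> integral\<^sup>L N (\<lambda>x. h x * ch x) = 0" and b: "sq N b"
  shows "integral\<^sup>L N (\<lambda>x. h x * b x) = 0"
proof (rule zero_coef_orth[OF CO h _ b])
  fix j
  obtain ch where ch: "\<forall>m. test_fun \<Omega> (ch m)" "(\<lambda>m. integral\<^sup>L N (\<lambda>x. (w j x - ch m x)^2)) \<longlonglongrightarrow> 0"
    using H01_seq[OF w_H01[of j]] by blast
  have "(\<lambda>m. integral\<^sup>L N (\<lambda>x. h x * ch m x)) \<longlonglongrightarrow> integral\<^sup>L N (\<lambda>x. h x * w j x)"
    by (rule sq_cont2[OF test_sq w_sq h ch(2)]) (use ch in blast)
  moreover have "(\<lambda>m. integral\<^sup>L N (\<lambda>x. h x * ch m x)) = (\<lambda>m. 0)" using z ch(1) by auto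
  ultimately have "(\<lambda>m. 0) \<longlonglongrightarrow> integral\<^sup>L N (\<lambda>x. h x * w j x)" by simp
  then have "integral\<^sup>L N (\<lambda>x. h x * w j x) = 0" using LIMSEQ_unique[OF _ tendsto_const] by metis
  then show "cf N w h j = 0" by (simp add: cf_def)
qed

end

lemma swapc: "(\<Sum>i\<in>A. \<Sum>j\<in>B. (c j::real) * X i j) = (\<Sum>j\<in>B. c j * (\<Sum>i\<in>A. X i j))"
  by (subst sum.swap) (simp add: sum_distrib_left)

lemma conv_bmult:
  assumes a: "\<And>m. sq M (a m)" and b: "b \<in> borel_measurable M" "\<And>x. \<bar>b x\<bar> \<le> B"
    and c: "(\<lambda>m. integral\<^sup>L M (\<lambda>x. (a m x)^2)) \<longlonglongrightarrow> 0"
  shows "(\<lambda>m. integral\<^sup>L M (\<lambda>x. (a m x * b x)^2)) \<longlonglongrightarrow> 0"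
proof (rule Lim_null_comparison[where g="\<lambda>m. B^2 * integral\<^sup>L M (\<lambda>x. (a m x)^2)"])
  show "(\<lambda>m. B^2 * integral\<^sup>L M (\<lambda>x. (a m x)^2)) \<longlonglongrightarrow> 0"
    using tendsto_mult[OF tendsto_const c, of "B^2"] by simp
  show "\<forall>\<^sub>F m in sequentially. norm (integral\<^sup>L M (\<lambda>x. (a m x * b x)^2)) \<le> B^2 * integral\<^sup>L M (\<lambda>x. (a m x)^2)"
  proof (rule always_eventually, rule allI)
    fix m
    have i1: "integrable M (\<lambda>x. (a m x * b x)^2)" using sq_bmult[OF a b] by (simp add: sq_def)
    have i2: "integrable M (\<lambda>x. B^2 * (a m x)^2)" using a by (simp add: sq_def)
    have "integral\<^sup>L M (\<lambda>x. (a m x * b x)^2) \<le> integral\<^sup>L M (\<lambda>x. B^2 * (a m x)^2)"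
    proof (rule integral_mono[OF i1 i2])
      fix x
      have "(b x)^2 \<le> B^2" using b(2)[of x]
        by (metis abs_ge_zero abs_le_square_iff abs_of_nonneg order.trans)
      then have "(b x)^2 * (a m x)^2 \<le> B^2 * (a m x)^2" by (simp add: mult_right_mono)
      then show "(a m x * b x)^2 \<le> B^2 * (a m x)^2" by (simp add: power_mult_distrib mult.commute)
    qed
    then show "norm (integral\<^sup>L M (\<lambda>x. (a m x * b x)^2)) \<le> B^2 * integral\<^sup>L M (\<lambda>x. (a m x)^2)"
      by simp
  qed
qed

lemma conv_add:
  assumes a: "\<And>m. sq M (a m)" and b: "\<And>m. sq M (b m)"
    and ca: "(\<lambda>m. integral\<^sup>L M (\<lambda>x. (a m x)^2)) \<longlonglongrightarrow> 0"
    and cb: "(\<lambda>m. integral\<^sup>L M (\<lambda>x. (b m x)^2)) \<longlonglongrightarrow> 0"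
  shows "(\<lambda>m. integral\<^sup>L M (\<lambda>x. (a m x + b m x)^2)) \<longlonglongrightarrow> 0"
proof (rule Lim_null_comparison[where g="\<lambda>m. 2 * integral\<^sup>L M (\<lambda>x. (a m x)^2) + 2 * integral\<^sup>L M (\<lambda>x. (b m x)^2)"])
  show "(\<lambda>m. 2 * integral\<^sup>L M (\<lambda>x. (a m x)^2) + 2 * integral\<^sup>L M (\<lambda>x. (b m x)^2)) \<longlonglongrightarrow> 0"
    using tendsto_add[OF tendsto_mult[OF tendsto_const ca] tendsto_mult[OF tendsto_const cb], of 2 2] by simp
  show "\<forall>\<^sub>F m in sequentially. norm (integral\<^sup>L M (\<lambda>x. (a m x + b m x)^2)) \<le> 2 * integral\<^sup>L M (\<lambda>x. (a m x)^2) + 2 * integral\<^sup>L M (\<lambda>x. (b m x)^2)"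
  proof (rule always_eventually, rule allI)
    fix m
    have i1: "integrable M (\<lambda>x. (a m x + b m x)^2)" using sq_add[OF a b] by (simp add: sq_def)
    have i2: "integrable M (\<lambda>x. 2 * (a m x)^2 + 2 * (b m x)^2)" using a b by (simp add: sq_def)
    have "integral\<^sup>L M (\<lambda>x. (a m x + b m x)^2) \<le> integral\<^sup>L M (\<lambda>x. 2 * (a m x)^2 + 2 * (b m x)^2)"
    proof (rule integral_mono[OF i1 i2])
      fix x
      have "0 \<le> (a m x - b m x)^2" by simp
      then show "(a m x + b m x)^2 \<le> 2 * (a m x)^2 + 2 * (b m x)^2"
        by (simp add: power2_eq_square algebra_simps)
    qed
    also have "\<dots> = 2 * integral\<^sup>L M (\<lambda>x. (a m x)^2) + 2 * integral\<^sup>L M (\<lambda>x. (b m x)^2)"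
      using a b by (simp add: sq_def)
    finally show "norm (integral\<^sup>L M (\<lambda>x. (a m x + b m x)^2)) \<le> 2 * integral\<^sup>L M (\<lambda>x. (a m x)^2) + 2 * integral\<^sup>L M (\<lambda>x. (b m x)^2)"
      by simp
  qed
qed

context setting
begin

lemma bessel:
  assumes T: "\<And>m. test_fun \<Omega> (ch m)" and f: "sq N f" and G: "\<And>i. sq N (G i)"
    and cf: "(\<lambda>m. integral\<^sup>L N (\<lambda>x. (f x - ch m x)^2)) \<longlonglongrightarrow> 0"
    and cG: "\<And>i. (\<lambda>m. integral\<^sup>L N (\<lambda>x. (G i x - pd i (ch m) x)^2)) \<longlonglongrightarrow> 0"
  shows "(\<Sum>j<n. lam j * (cf N w f j)^2) \<le> (\<Sum>i\<in>UNIV. integral\<^sup>L N (\<lambda>x. (G i x)^2))"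
proof -
  define c where "c j = cf N w f j" for j
  define E where "E j i = wpd \<Omega> i (w j)" for j i
  have sqE: "sq N (E j i)" for j i unfolding E_def by (rule wpdw_sq)
  have EG: "(\<Sum>i\<in>UNIV. integral\<^sup>L N (\<lambda>x. E j i x * G i x)) = lam j * c j" for j
  proof -
    have "(\<Sum>i\<in>UNIV. integral\<^sup>L N (\<lambda>x. E j i x * G i x)) = lam j * integral\<^sup>L N (\<lambda>x. w j x * f x)"
      unfolding E_def by (rule ext_eig[OF T f G cf cG])
    also have "integral\<^sup>L N (\<lambda>x. w j x * f x) = c j" unfolding c_def cf_def by (simp add: mult.commute)
    finally show ?thesis .
  qed
  have EE: "(\<Sum>i\<in>UNIV. integral\<^sup>L N (\<lambda>x. E k i x * E j i x)) = lam k * (if k = j then 1 else 0)" for j k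
    unfolding E_def by (rule grad_orth)
  define S where "S i x = (\<Sum>j<n. c j * E j i x)" for i x
  have sqS: "sq N (S i)" for i unfolding S_def by (intro sq_sum sq_cmult sqE)
  have I1: "integral\<^sup>L N (\<lambda>x. S i x * G i x) = (\<Sum>j<n. c j * integral\<^sup>L N (\<lambda>x. E j i x * G i x))" for i
    unfolding S_def by (rule lin_sum) (use sqE G in auto)
  have I3: "integral\<^sup>L N (\<lambda>x. E j i x * S i x) = (\<Sum>k<n. c k * integral\<^sup>L N (\<lambda>x. E k i x * E j i x))" for i j
  proof -
    have "integral\<^sup>L N (\<lambda>x. E j i x * S i x) = integral\<^sup>L N (\<lambda>x. S i x * E j i x)" by (simp add: mult.commute)
    also have "\<dots> = (\<Sum>k<n. c k * integral\<^sup>L N (\<lambda>x. E k i x * E j i x))"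
      unfolding S_def by (rule lin_sum) (use sqE in auto)
    finally show ?thesis .
  qed
  have I2: "integral\<^sup>L N (\<lambda>x. S i x * S i x) = (\<Sum>j<n. c j * (\<Sum>k<n. c k * integral\<^sup>L N (\<lambda>x. E k i x * E j i x)))" for i
  proof -
    have "integral\<^sup>L N (\<lambda>x. S i x * S i x) = (\<Sum>j<n. c j * integral\<^sup>L N (\<lambda>x. E j i x * S i x))"
      by (subst (1) S_def, rule lin_sum) (use sqE sqS in auto)
    then show ?thesis using I3 by simp
  qed
  have ex: "integral\<^sup>L N (\<lambda>x. (G i x - S i x)^2)
      = integral\<^sup>L N (\<lambda>x. (G i x)^2) - 2 * integral\<^sup>L N (\<lambda>x. S i x * G i x) + integral\<^sup>L N (\<lambda>x. S i x * S i x)" for i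
  proof -
    have "integral\<^sup>L N (\<lambda>x. (G i x - S i x)^2) = integral\<^sup>L N (\<lambda>x. (G i x)^2 - 2 * (S i x * G i x) + S i x * S i x)"
      by (rule Bochner_Integration.integral_cong) (auto simp: power2_eq_square algebra_simps)
    also have "\<dots> = integral\<^sup>L N (\<lambda>x. (G i x)^2) - 2 * integral\<^sup>L N (\<lambda>x. S i x * G i x) + integral\<^sup>L N (\<lambda>x. S i x * S i x)"
      using G[of i] sq_mult_int[OF sqS G, of i i] sq_mult_int[OF sqS sqS, of i i] by (simp add: sq_def)
    finally show ?thesis .
  qed
  define A where "A = (\<Sum>j<n. lam j * (c j)^2)"
  have sum1: "(\<Sum>i\<in>UNIV. integral\<^sup>L N (\<lambda>x. S i x * G i x)) = A"
  proof -
    have "(\<Sum>i\<in>UNIV. integral\<^sup>L N (\<lambda>x. S i x * G i x)) = (\<Sum>i\<in>UNIV. \<Sum>j<n. c j * integral\<^sup>L N (\<lambda>x. E j i x * G i x))"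
      using I1 by simp
    also have "\<dots> = (\<Sum>j<n. c j * (\<Sum>i\<in>UNIV. integral\<^sup>L N (\<lambda>x. E j i x * G i x)))" by (rule swapc)
    also have "\<dots> = A" unfolding A_def EG by (simp add: power2_eq_square mult_ac)
    finally show ?thesis .
  qed
  have sum2: "(\<Sum>i\<in>UNIV. integral\<^sup>L N (\<lambda>x. S i x * S i x)) = A"
  proof -
    have "(\<Sum>i\<in>UNIV. integral\<^sup>L N (\<lambda>x. S i x * S i x))
        = (\<Sum>i\<in>UNIV. \<Sum>j<n. c j * (\<Sum>k<n. c k * integral\<^sup>L N (\<lambda>x. E k i x * E j i x)))"
      using I2 by simp
    also have "\<dots> = (\<Sum>j<n. c j * (\<Sum>i\<in>UNIV. \<Sum>k<n. c k * integral\<^sup>L N (\<lambda>x. E k i x * E j i x)))"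
      by (rule swapc)
    also have "\<dots> = (\<Sum>j<n. c j * (\<Sum>k<n. c k * (\<Sum>i\<in>UNIV. integral\<^sup>L N (\<lambda>x. E k i x * E j i x))))"
      by (simp only: swapc)
    also have "\<dots> = (\<Sum>j<n. c j * (\<Sum>k<n. c k * (lam k * (if k = j then 1 else 0))))"
      by (simp only: EE)
    also have "\<dots> = (\<Sum>j<n. c j * (c j * lam j))"
      by (rule sum.cong) (simp_all add: if_distrib sum.delta cong: if_cong)
    also have "\<dots> = A" unfolding A_def by (simp add: power2_eq_square mult_ac)
    finally show ?thesis .
  qed
  have "0 \<le> (\<Sum>i\<in>UNIV. integral\<^sup>L N (\<lambda>x. (G i x - S i x)^2))"
    by (intro sum_nonneg integral_nonneg_AE) auto
  also have "\<dots> = (\<Sum>i\<in>UNIV. integral\<^sup>L N (\<lambda>x. (G i x)^2)) - 2 * (\<Sum>i\<in>UNIV. integral\<^sup>L N (\<lambda>x. S i x * G i x))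
      + (\<Sum>i\<in>UNIV. integral\<^sup>L N (\<lambda>x. S i x * S i x))"
    by (simp add: ex sum.distrib sum_subtractf sum_distrib_left)
  also have "\<dots> = (\<Sum>i\<in>UNIV. integral\<^sup>L N (\<lambda>x. (G i x)^2)) - A" using sum1 sum2 by simp
  finally show ?thesis unfolding A_def c_def by simp
qed

lemma Lam_spec:
  assumes T: "\<And>m. test_fun \<Omega> (ch m)" and f: "sq N f" and G: "\<And>i. sq N (G i)"
    and cf: "(\<lambda>m. integral\<^sup>L N (\<lambda>x. (f x - ch m x)^2)) \<longlonglongrightarrow> 0"
    and cG: "\<And>i. (\<lambda>m. integral\<^sup>L N (\<lambda>x. (G i x - pd i (ch m) x)^2)) \<longlonglongrightarrow> 0"
  shows "sq N (Lam \<Omega> w lam f) \<and> (\<forall>j. cf N w (Lam \<Omega> w lam f) j = sqrt (lam j) * cf N w f j)"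
proof -
  have sm: "summable (\<lambda>j. lam j * (cf N w f j)^2)"
    by (rule summableI_nonneg_bounded[OF _ bessel[OF T f G cf cG]]) (simp add: lam_nonneg)
  have "(\<lambda>j. (sqrt (lam j) * cf N w f j)^2) = (\<lambda>j. lam j * (cf N w f j)^2)"
    by (simp add: power_mult_distrib lam_nonneg)
  with sm have "summable (\<lambda>j. (sqrt (lam j) * cf N w f j)^2)" by simp
  from riesz_fischer[OF ONS_w this] obtain g where g: "sq N g" "\<forall>j. cf N w g j = sqrt (lam j) * cf N w f j"
    by blast
  then have "L2 \<Omega> g \<and> (\<forall>j. coef \<Omega> w g j = sqrt (lam j) * coef \<Omega> w f j)"
    by (simp add: L2_eq coef_eq)
  then have "L2 \<Omega> (Lam \<Omega> w lam f) \<and> (\<forall>j. coef \<Omega> w (Lam \<Omega> w lam f) j = sqrt (lam j) * coef \<Omega> w f j)"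
    unfolding Lam_def by (rule someI[where P="\<lambda>g. L2 \<Omega> g \<and> (\<forall>j. coef \<Omega> w g j = sqrt (lam j) * coef \<Omega> w f j)"])
  then show ?thesis by (simp add: L2_eq coef_eq)
qed

lemma Lam_spec_H01:
  assumes "H01 \<Omega> f"
  shows "sq N (Lam \<Omega> w lam f) \<and> (\<forall>j. cf N w (Lam \<Omega> w lam f) j = sqrt (lam j) * cf N w f j)"
proof -
  obtain ch where ch: "\<forall>m. test_fun \<Omega> (ch m)" "(\<lambda>m. integral\<^sup>L N (\<lambda>x. (f x - ch m x)^2)) \<longlonglongrightarrow> 0"
     "\<forall>i. (\<lambda>m. integral\<^sup>L N (\<lambda>x. (wpd \<Omega> i f x - pd i (ch m) x)^2)) \<longlonglongrightarrow> 0"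
    using H01_seq[OF assms] by blast
  show ?thesis
    by (rule Lam_spec[of ch f "\<lambda>i. wpd \<Omega> i f"]) (use ch assms H01_H1 H1_L2 wpd_sq in auto)
qed

end

context setting
begin

lemma test_meas: "test_fun \<Omega> t \<Longrightarrow> t \<in> borel_measurable N"
  using smooth_meas unfolding test_fun_def by blast

lemma sq_test_mult:
  assumes "sq N a" "test_fun \<Omega> t" shows "sq N (\<lambda>x. a x * t x)"
proof -
  obtain B where "\<And>x. \<bar>t x\<bar> \<le> B" using test_fun_bounded[OF assms(2)] by blast
  from sq_bmult[OF assms(1) test_meas[OF assms(2)] this] show ?thesis .
qed

lemma conv_test:
  assumes "\<And>m. sq N (a m)" "test_fun \<Omega> t" "(\<lambda>m. integral\<^sup>L N (\<lambda>x. (a m x)^2)) \<longlonglongrightarrow> 0"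
  shows "(\<lambda>m. integral\<^sup>L N (\<lambda>x. (a m x * t x)^2)) \<longlonglongrightarrow> 0"
proof -
  obtain B where "\<And>x. \<bar>t x\<bar> \<le> B" using test_fun_bounded[OF assms(2)] by blast
  from conv_bmult[OF assms(1) test_meas[OF assms(2)] this assms(3)] show ?thesis .
qed

lemma test_smooth: "test_fun \<Omega> t \<Longrightarrow> smooth t" by (simp add: test_fun_def)

context
  fixes \<psi> \<phi> :: "'n fn" and k :: 'n
  assumes psi: "H01 \<Omega> \<psi>" and phi: "test_fun \<Omega> \<phi>"
begin

definition "ff = (\<lambda>x. pd k \<phi> x * \<psi> x)"
definition "GG i = (\<lambda>x. wpd \<Omega> i \<psi> x * pd k \<phi> x + \<psi> x * pd i (pd k \<phi>) x)"

lemma D_test: "test_fun \<Omega> (pd k \<phi>)" by (rule test_fun_pd[OF phi])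
lemma DD_test: "test_fun \<Omega> (pd i (pd k \<phi>))" by (rule test_fun_pd[OF D_test])
lemma psi_sq: "sq N \<psi>" using psi H01_H1 H1_L2 by blast
lemma wpsi_sq: "sq N (wpd \<Omega> i \<psi>)" using psi H01_H1 wpd_sq by blast

lemma ff_sq: "sq N ff"
  unfolding ff_def using sq_test_mult[OF psi_sq D_test] by (simp add: mult.commute)

lemma GG_sq: "sq N (GG i)"
  unfolding GG_def by (intro sq_add sq_test_mult wpsi_sq D_test psi_sq DD_test)

lemma ff_data:
  "\<exists>ch. (\<forall>m. test_fun \<Omega> (ch m)) \<and> (\<lambda>m. integral\<^sup>L N (\<lambda>x. (ff x - ch m x)^2)) \<longlonglongrightarrow> 0 \<and>
     (\<forall>i. (\<lambda>m. integral\<^sup>L N (\<lambda>x. (GG i x - pd i (ch m) x)^2)) \<longlonglongrightarrow> 0)"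
proof -
  obtain chs where chs: "\<forall>m. test_fun \<Omega> (chs m)" "(\<lambda>m. integral\<^sup>L N (\<lambda>x. (\<psi> x - chs m x)^2)) \<longlonglongrightarrow> 0"
     "\<forall>i. (\<lambda>m. integral\<^sup>L N (\<lambda>x. (wpd \<Omega> i \<psi> x - pd i (chs m) x)^2)) \<longlonglongrightarrow> 0"
    using H01_seq[OF psi] by blast
  define ch where "ch m = (\<lambda>x. chs m x * pd k \<phi> x)" for m
  have T: "test_fun \<Omega> (ch m)" for m unfolding ch_def
    by (rule test_fun_mult[OF _ test_smooth[OF D_test]]) (use chs in blast)
  have sqa: "sq N (\<lambda>x. \<psi> x - chs m x)" for m using psi_sq test_sq chs(1) sq_diff by blast
  have sqb: "sq N (\<lambda>x. wpd \<Omega> i \<psi> x - pd i (chs m) x)" for m i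
    using wpsi_sq test_sq test_fun_pd chs(1) sq_diff by blast
  have c1: "(\<lambda>m. integral\<^sup>L N (\<lambda>x. (ff x - ch m x)^2)) \<longlonglongrightarrow> 0"
  proof -
    have "(\<lambda>m. integral\<^sup>L N (\<lambda>x. ((\<psi> x - chs m x) * pd k \<phi> x)^2)) \<longlonglongrightarrow> 0"
      by (rule conv_test[OF sqa D_test chs(2)])
    moreover have "(\<lambda>x. (ff x - ch m x)^2) = (\<lambda>x. ((\<psi> x - chs m x) * pd k \<phi> x)^2)" for m
      unfolding ff_def ch_def by (simp add: algebra_simps)
    ultimately show ?thesis by simp
  qed
  have c2: "(\<lambda>m. integral\<^sup>L N (\<lambda>x. (GG i x - pd i (ch m) x)^2)) \<longlonglongrightarrow> 0" for i
  proof -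
    have "(\<lambda>m. integral\<^sup>L N (\<lambda>x. ((wpd \<Omega> i \<psi> x - pd i (chs m) x) * pd k \<phi> x + (\<psi> x - chs m x) * pd i (pd k \<phi>) x)^2)) \<longlonglongrightarrow> 0"
    proof (rule conv_add)
      show "sq N (\<lambda>x. (wpd \<Omega> i \<psi> x - pd i (chs m) x) * pd k \<phi> x)" for m
        by (rule sq_test_mult[OF sqb D_test])
      show "sq N (\<lambda>x. (\<psi> x - chs m x) * pd i (pd k \<phi>) x)" for m
        by (rule sq_test_mult[OF sqa DD_test])
      show "(\<lambda>m. integral\<^sup>L N (\<lambda>x. ((wpd \<Omega> i \<psi> x - pd i (chs m) x) * pd k \<phi> x)^2)) \<longlonglongrightarrow> 0"
        by (rule conv_test[OF sqb D_test]) (use chs(3) in blast)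
      show "(\<lambda>m. integral\<^sup>L N (\<lambda>x. ((\<psi> x - chs m x) * pd i (pd k \<phi>) x)^2)) \<longlonglongrightarrow> 0"
        by (rule conv_test[OF sqa DD_test chs(2)])
    qed
    moreover have "(\<lambda>x. (GG i x - pd i (ch m) x)^2) =
        (\<lambda>x. ((wpd \<Omega> i \<psi> x - pd i (chs m) x) * pd k \<phi> x + (\<psi> x - chs m x) * pd i (pd k \<phi>) x)^2)" for m
    proof -
      have "pd i (ch m) x = pd i (chs m) x * pd k \<phi> x + chs m x * pd i (pd k \<phi>) x" for x
        unfolding ch_def by (rule pd_mult) (use chs(1) test_smooth D_test in blast)+
      then show ?thesis unfolding GG_def by (simp add: algebra_simps)
    qed
    ultimately show ?thesis by simp
  qed
  show ?thesis using T c1 c2 by blast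
qed

lemma ff_Lam: "sq N (Lam \<Omega> w lam ff) \<and> (\<forall>j. cf N w (Lam \<Omega> w lam ff) j = sqrt (lam j) * cf N w ff j)"
proof -
  obtain ch where ch: "\<forall>m. test_fun \<Omega> (ch m)" "(\<lambda>m. integral\<^sup>L N (\<lambda>x. (ff x - ch m x)^2)) \<longlonglongrightarrow> 0"
     "\<forall>i. (\<lambda>m. integral\<^sup>L N (\<lambda>x. (GG i x - pd i (ch m) x)^2)) \<longlonglongrightarrow> 0"
    using ff_data by blast
  show ?thesis by (rule Lam_spec[of ch ff GG]) (use ch ff_sq GG_sq in auto)
qed

lemma ff_weak: "weak_pd \<Omega> i ff (GG i)"
  unfolding weak_pd_def
proof (intro conjI allI impI)
  show "L2 \<Omega> ff" using ff_sq L2_eq by blast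
  show "L2 \<Omega> (GG i)" using GG_sq L2_eq by blast
  fix t assume t: "test_fun \<Omega> t"
  have tD: "test_fun \<Omega> (\<lambda>x. t x * pd k \<phi> x)" by (rule test_fun_mult[OF t test_smooth[OF D_test]])
  have tDD: "test_fun \<Omega> (\<lambda>x. t x * pd i (pd k \<phi>) x)" by (rule test_fun_mult[OF t test_smooth[OF DD_test]])
  have pdtD: "pd i (\<lambda>x. t x * pd k \<phi> x) x = pd i t x * pd k \<phi> x + t x * pd i (pd k \<phi>) x" for x
    by (rule pd_mult[OF test_smooth[OF t] test_smooth[OF D_test]])
  have wk: "weak_pd \<Omega> i \<psi> (wpd \<Omega> i \<psi>)" using psi H01_H1 wpd_weak by blast
  have w1: "integral\<^sup>L N (\<lambda>x. \<psi> x * pd i (\<lambda>x. t x * pd k \<phi> x) x)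
      = - integral\<^sup>L N (\<lambda>x. wpd \<Omega> i \<psi> x * (t x * pd k \<phi> x))"
    using wk tD unfolding weak_pd_def int_eq by blast
  have s1: "sq N (pd i (\<lambda>x. t x * pd k \<phi> x))" by (rule test_sq[OF test_fun_pd[OF tD]])
  have "integral\<^sup>L N (\<lambda>x. ff x * pd i t x)
      = integral\<^sup>L N (\<lambda>x. \<psi> x * pd i (\<lambda>x. t x * pd k \<phi> x) x - \<psi> x * (t x * pd i (pd k \<phi>) x))"
    unfolding ff_def pdtD by (rule Bochner_Integration.integral_cong) (auto simp: algebra_simps)
  also have "\<dots> = integral\<^sup>L N (\<lambda>x. \<psi> x * pd i (\<lambda>x. t x * pd k \<phi> x) x) - integral\<^sup>L N (\<lambda>x. \<psi> x * (t x * pd i (pd k \<phi>) x))"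
    using sq_mult_int[OF psi_sq s1] sq_mult_int[OF psi_sq test_sq[OF tDD]] by simp
  also have "\<dots> = - integral\<^sup>L N (\<lambda>x. wpd \<Omega> i \<psi> x * (t x * pd k \<phi> x)) - integral\<^sup>L N (\<lambda>x. \<psi> x * (t x * pd i (pd k \<phi>) x))"
    using w1 by simp
  also have "\<dots> = - integral\<^sup>L N (\<lambda>x. GG i x * t x)"
  proof -
    have "integral\<^sup>L N (\<lambda>x. GG i x * t x) = integral\<^sup>L N (\<lambda>x. wpd \<Omega> i \<psi> x * (t x * pd k \<phi> x) + \<psi> x * (t x * pd i (pd k \<phi>) x))"
      unfolding GG_def by (rule Bochner_Integration.integral_cong) (auto simp: algebra_simps)
    also have "\<dots> = integral\<^sup>L N (\<lambda>x. wpd \<Omega> i \<psi> x * (t x * pd k \<phi> x)) + integral\<^sup>L N (\<lambda>x. \<psi> x * (t x * pd i (pd k \<phi>) x))"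
      using sq_mult_int[OF wpsi_sq test_sq[OF tD]] sq_mult_int[OF psi_sq test_sq[OF tDD]] by simp
    finally show ?thesis by simp
  qed
  finally show "integ \<Omega> (\<lambda>x. ff x * pd i t x) = - integ \<Omega> (\<lambda>x. GG i x * t x)" unfolding int_eq .
qed

lemma ff_H1: "H1 \<Omega> ff" unfolding H1_def using ff_sq L2_eq ff_weak by blast

lemma ff_wpd_eq:
  assumes b: "sq N b"
  shows "integral\<^sup>L N (\<lambda>x. wpd \<Omega> i ff x * b x) = integral\<^sup>L N (\<lambda>x. GG i x * b x)"
proof -
  have w1: "weak_pd \<Omega> i ff (wpd \<Omega> i ff)" by (rule wpd_weak[OF ff_H1])
  have sw: "sq N (wpd \<Omega> i ff)" by (rule weak_sq[OF w1])
  have sh: "sq N (\<lambda>x. wpd \<Omega> i ff x - GG i x)" by (rule sq_diff[OF sw GG_sq])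
  have "integral\<^sup>L N (\<lambda>x. (wpd \<Omega> i ff x - GG i x) * b x) = 0"
  proof (rule uniq[OF sh _ b])
    fix t assume t: "test_fun \<Omega> t"
    have a1: "integral\<^sup>L N (\<lambda>x. ff x * pd i t x) = - integral\<^sup>L N (\<lambda>x. wpd \<Omega> i ff x * t x)"
      using w1 t unfolding weak_pd_def int_eq by blast
    have a2: "integral\<^sup>L N (\<lambda>x. ff x * pd i t x) = - integral\<^sup>L N (\<lambda>x. GG i x * t x)"
      using ff_weak t unfolding weak_pd_def int_eq by blast
    have "integral\<^sup>L N (\<lambda>x. (wpd \<Omega> i ff x - GG i x) * t x) = integral\<^sup>L N (\<lambda>x. wpd \<Omega> i ff x * t x - GG i x * t x)"
      by (simp add: left_diff_distrib)
    also have "\<dots> = integral\<^sup>L N (\<lambda>x. wpd \<Omega> i ff x * t x) - integral\<^sup>L N (\<lambda>x. GG i x * t x)"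
      using sq_mult_int[OF sw test_sq[OF t]] sq_mult_int[OF GG_sq test_sq[OF t]] by simp
    also have "\<dots> = 0" using a1 a2 by simp
    finally show "integral\<^sup>L N (\<lambda>x. (wpd \<Omega> i ff x - GG i x) * t x) = 0" .
  qed
  moreover have "integral\<^sup>L N (\<lambda>x. (wpd \<Omega> i ff x - GG i x) * b x) = integral\<^sup>L N (\<lambda>x. wpd \<Omega> i ff x * b x) - integral\<^sup>L N (\<lambda>x. GG i x * b x)"
    using sq_mult_int[OF sw b] sq_mult_int[OF GG_sq b] by (simp add: left_diff_distrib)
  ultimately show ?thesis by simp
qed

end

end

lemma sum_two:
  fixes F :: "'n::finite \<Rightarrow> real"
  assumes "i1 \<noteq> i2" "\<And>k. k \<noteq> i1 \<Longrightarrow> k \<noteq> i2 \<Longrightarrow> F k = 0"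
  shows "(\<Sum>k\<in>UNIV. F k) = F i1 + F i2"
proof -
  have "(\<Sum>k\<in>UNIV. F k) = (\<Sum>k\<in>{i1, i2}. F k)"
    by (rule sum.mono_neutral_right) (use assms in auto)
  also have "\<dots> = F i1 + F i2" using assms(1) by simp
  finally show ?thesis .
qed

theorem lemma3p2:
  fixes \<Omega> :: "(real^'n::finite) set"
    and w :: "nat \<Rightarrow> real^'n \<Rightarrow> real" and lam :: "nat \<Rightarrow> real"
    and i1 i2 :: 'n
    and \<psi> \<phi> \<theta> :: "real^'n \<Rightarrow> real" and u :: "'n \<Rightarrow> real^'n \<Rightarrow> real"
  assumes "CARD('n) \<ge> 2" and "i1 \<noteq> i2"
    and "smooth_bounded_domain \<Omega>"
    and "dirichlet_eigenbasis \<Omega> w lam"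
    and "H01 \<Omega> \<psi>"
    and "u = gperp \<Omega> i1 i2 \<psi>"
    and "\<theta> = Lam \<Omega> w lam \<psi>"
    and "test_fun \<Omega> \<phi>"
  shows "integ \<Omega> (\<lambda>x. \<theta> x * (\<Sum>k\<in>UNIV. u k x * pd k \<phi> x))
   = 1/2 * (\<Sum>k\<in>UNIV.
              Lam_pair \<Omega> w lam (u k) (\<lambda>x. pd k \<phi> x * \<psi> x)
            - perp_pair \<Omega> i1 i2 (Lam \<Omega> w lam \<psi>) k (\<lambda>x. pd k \<phi> x * \<psi> x))
   - 1/2 * (\<Sum>k\<in>UNIV. integ \<Omega> (\<lambda>x. u k x *
              (Lam \<Omega> w lam (\<lambda>y. \<psi> y * pd k \<phi> y) x - pd k \<phi> x * Lam \<Omega> w lam \<psi> x)))"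
proof -
  interpret S: setting \<Omega> w lam using assms(3,4) by unfold_locales
  note psi = assms(5) and phi = assms(8) and i12 = assms(2)
  define T where "T = Lam \<Omega> w lam \<psi>"
  have \<theta>T: "\<theta> = T" using assms(7) T_def by simp
  have Tsp: "sq S.N T" using S.Lam_spec_H01[OF psi] T_def by simp
  define D where "D k = pd k \<phi>" for k
  have Dt: "test_fun \<Omega> (D k)" for k unfolding D_def by (rule test_fun_pd[OF phi])
  define g where "g k = (\<lambda>x. pd k \<phi> x * \<psi> x)" for k
  have g_ff: "g k = S.ff \<psi> \<phi> k" for k unfolding g_def S.ff_def[OF psi phi] ..
  define L where "L k = Lam \<Omega> w lam (g k)" for k
  have Lam_eq: "(\<lambda>y. \<psi> y * pd k \<phi> y) = g k" for k unfolding g_def by (simp add: mult.commute)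
  have Lsp: "sq S.N (L k) \<and> (\<forall>j. cf S.N w (L k) j = sqrt (lam j) * cf S.N w (g k) j)" for k
    unfolding L_def g_ff by (rule S.ff_Lam[OF psi phi])
  have gsq: "sq S.N (g k)" for k unfolding g_ff by (rule S.ff_sq[OF psi phi])
  have psq: "sq S.N \<psi>" by (rule S.psi_sq[OF psi phi])
  have wsq: "sq S.N (wpd \<Omega> i \<psi>)" for i by (rule S.wpsi_sq[OF psi phi])
  have u1: "u i1 = (\<lambda>x. - wpd \<Omega> i2 \<psi> x)" using assms(6) by (simp add: gperp_def fun_eq_iff)
  have u2: "u i2 = (\<lambda>x. wpd \<Omega> i1 \<psi> x)" using assms(6) i12 by (simp add: gperp_def fun_eq_iff)
  have u0: "k \<noteq> i1 \<Longrightarrow> k \<noteq> i2 \<Longrightarrow> u k = (\<lambda>x. 0)" for k using assms(6) by (simp add: gperp_def fun_eq_iff)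
  have usq: "sq S.N (u k)" for k
  proof (cases "k = i1")
    case True then show ?thesis using u1 sq_uminus[OF wsq] by simp
  next
    case False
    then show ?thesis
    proof (cases "k = i2")
      case True then show ?thesis using u2 wsq by simp
    next
      case False then show ?thesis using u0 \<open>k \<noteq> i1\<close> sq_zero by simp
    qed
  qed
  have uDsq: "sq S.N (\<lambda>x. u k x * D k x)" for k by (rule S.sq_test_mult[OF usq Dt])
  define A where "A = (\<Sum>k\<in>UNIV. integral\<^sup>L S.N (\<lambda>x. T x * (u k x * D k x)))"
  define P where "P = (\<Sum>k\<in>UNIV. integral\<^sup>L S.N (\<lambda>x. u k x * L k x))"
  have LHS: "integ \<Omega> (\<lambda>x. \<theta> x * (\<Sum>k\<in>UNIV. u k x * pd k \<phi> x)) = A"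
  proof -
    have "integ \<Omega> (\<lambda>x. \<theta> x * (\<Sum>k\<in>UNIV. u k x * pd k \<phi> x))
        = integral\<^sup>L S.N (\<lambda>x. \<Sum>k\<in>UNIV. T x * (u k x * D k x))"
      unfolding S.int_eq \<theta>T D_def by (simp add: sum_distrib_left)
    also have "\<dots> = A" unfolding A_def
      by (rule Bochner_Integration.integral_sum) (use sq_mult_int[OF Tsp uDsq] in auto)
    finally show ?thesis .
  qed
  have LP: "Lam_pair \<Omega> w lam (u k) (\<lambda>x. pd k \<phi> x * \<psi> x) = integral\<^sup>L S.N (\<lambda>x. u k x * L k x)" for k
  proof -
    have "integral\<^sup>L S.N (\<lambda>x. u k x * L k x) = (\<Sum>j. cf S.N w (u k) j * cf S.N w (L k) j)"
      by (rule parseval_eq[OF S.CO usq]) (use Lsp in blast)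
    also have "\<dots> = (\<Sum>j. sqrt (lam j) * coef \<Omega> w (u k) j * coef \<Omega> w (g k) j)"
      using Lsp[of k] by (simp add: S.coef_eq mult_ac)
    finally show ?thesis unfolding Lam_pair_def g_def by simp
  qed
  have GGeq: "S.GG \<psi> \<phi> k i = (\<lambda>x. wpd \<Omega> i \<psi> x * pd k \<phi> x + \<psi> x * pd i (pd k \<phi>) x)" for k i
    unfolding S.GG_def[OF psi phi] ..
  have wff: "integral\<^sup>L S.N (\<lambda>x. wpd \<Omega> i (g k) x * T x)
      = integral\<^sup>L S.N (\<lambda>x. (wpd \<Omega> i \<psi> x * pd k \<phi> x + \<psi> x * pd i (pd k \<phi>) x) * T x)" for i k
    using S.ff_wpd_eq[OF psi phi Tsp, of i k] unfolding g_ff GGeq .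
  have PP: "(\<Sum>k\<in>UNIV. perp_pair \<Omega> i1 i2 (Lam \<Omega> w lam \<psi>) k (\<lambda>x. pd k \<phi> x * \<psi> x)) = - A"
  proof -
    have pp: "perp_pair \<Omega> i1 i2 (Lam \<Omega> w lam \<psi>) k (\<lambda>x. pd k \<phi> x * \<psi> x)
        = - integral\<^sup>L S.N (\<lambda>x. T x * gperp \<Omega> i1 i2 (g k) k x)" for k
      unfolding perp_pair_def S.int_eq T_def g_def ..
    have "(\<Sum>k\<in>UNIV. integral\<^sup>L S.N (\<lambda>x. T x * gperp \<Omega> i1 i2 (g k) k x))
        = integral\<^sup>L S.N (\<lambda>x. T x * gperp \<Omega> i1 i2 (g i1) i1 x) + integral\<^sup>L S.N (\<lambda>x. T x * gperp \<Omega> i1 i2 (g i2) i2 x)"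
      by (rule sum_two[OF i12]) (simp add: gperp_def)
    also have "\<dots> = - integral\<^sup>L S.N (\<lambda>x. wpd \<Omega> i2 (g i1) x * T x) + integral\<^sup>L S.N (\<lambda>x. wpd \<Omega> i1 (g i2) x * T x)"
      using i12 by (simp add: gperp_def mult.commute)
    also have "\<dots> = - integral\<^sup>L S.N (\<lambda>x. (wpd \<Omega> i2 \<psi> x * pd i1 \<phi> x + \<psi> x * pd i2 (pd i1 \<phi>) x) * T x)
        + integral\<^sup>L S.N (\<lambda>x. (wpd \<Omega> i1 \<psi> x * pd i2 \<phi> x + \<psi> x * pd i1 (pd i2 \<phi>) x) * T x)"
      unfolding wff ..
    also have "\<dots> = integral\<^sup>L S.N (\<lambda>x. T x * (u i1 x * D i1 x)) + integral\<^sup>L S.N (\<lambda>x. T x * (u i2 x * D i2 x))"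
    proof -
      define X where "X = pd i2 (pd i1 \<phi>)"
      have X2: "pd i1 (pd i2 \<phi>) = X" unfolding X_def using pd_symm[OF S.test_smooth[OF phi]] by (simp add: fun_eq_iff)
      have Xt: "test_fun \<Omega> X" unfolding X_def by (intro test_fun_pd phi)
      have i1: "integrable S.N (\<lambda>x. (wpd \<Omega> i \<psi> x * pd k \<phi> x) * T x)" for i k
        using sq_mult_int[OF S.sq_test_mult[OF wsq Dt[unfolded D_def]] Tsp] .
      have i2: "integrable S.N (\<lambda>x. (\<psi> x * X x) * T x)"
        using sq_mult_int[OF S.sq_test_mult[OF psq Xt] Tsp] .
      have e1: "integral\<^sup>L S.N (\<lambda>x. (wpd \<Omega> i \<psi> x * pd k \<phi> x + \<psi> x * X x) * T x)
          = integral\<^sup>L S.N (\<lambda>x. (wpd \<Omega> i \<psi> x * pd k \<phi> x) * T x) + integral\<^sup>L S.N (\<lambda>x. (\<psi> x * X x) * T x)" for i k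
        using i1[of i k] i2 by (simp add: distrib_right)
      have e2: "integral\<^sup>L S.N (\<lambda>x. T x * (u i1 x * D i1 x)) = - integral\<^sup>L S.N (\<lambda>x. (wpd \<Omega> i2 \<psi> x * pd i1 \<phi> x) * T x)"
        unfolding u1 D_def by (simp add: mult_ac)
      have e3: "integral\<^sup>L S.N (\<lambda>x. T x * (u i2 x * D i2 x)) = integral\<^sup>L S.N (\<lambda>x. (wpd \<Omega> i1 \<psi> x * pd i2 \<phi> x) * T x)"
        unfolding u2 D_def by (simp add: mult_ac)
      show ?thesis unfolding X2 X_def[symmetric] e1 e2 e3 by simp
    qed
    also have "\<dots> = A"
    proof -
      have "A = (\<Sum>k\<in>UNIV. integral\<^sup>L S.N (\<lambda>x. T x * (u k x * D k x)))" by (simp add: A_def)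
      also have "\<dots> = integral\<^sup>L S.N (\<lambda>x. T x * (u i1 x * D i1 x)) + integral\<^sup>L S.N (\<lambda>x. T x * (u i2 x * D i2 x))"
        by (rule sum_two[OF i12]) (simp add: u0)
      finally show ?thesis by simp
    qed
    finally show ?thesis unfolding pp by (simp add: sum_negf)
  qed
  have RR: "(\<Sum>k\<in>UNIV. integ \<Omega> (\<lambda>x. u k x *
              (Lam \<Omega> w lam (\<lambda>y. \<psi> y * pd k \<phi> y) x - pd k \<phi> x * Lam \<Omega> w lam \<psi> x))) = P - A"
  proof -
    have "integ \<Omega> (\<lambda>x. u k x * (Lam \<Omega> w lam (\<lambda>y. \<psi> y * pd k \<phi> y) x - pd k \<phi> x * Lam \<Omega> w lam \<psi> x))
        = integral\<^sup>L S.N (\<lambda>x. u k x * L k x) - integral\<^sup>L S.N (\<lambda>x. T x * (u k x * D k x))" for k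
    proof -
      have "integ \<Omega> (\<lambda>x. u k x * (Lam \<Omega> w lam (\<lambda>y. \<psi> y * pd k \<phi> y) x - pd k \<phi> x * Lam \<Omega> w lam \<psi> x))
          = integral\<^sup>L S.N (\<lambda>x. u k x * L k x - T x * (u k x * D k x))"
        unfolding S.int_eq Lam_eq L_def[symmetric] T_def[symmetric] D_def by (simp add: algebra_simps)
      also have "\<dots> = integral\<^sup>L S.N (\<lambda>x. u k x * L k x) - integral\<^sup>L S.N (\<lambda>x. T x * (u k x * D k x))"
        using sq_mult_int[OF usq[of k] conjunct1[OF Lsp[of k]]] sq_mult_int[OF Tsp uDsq[of k]] by simp
      finally show ?thesis .
    qed
    then show ?thesis unfolding P_def A_def by (simp add: sum_subtractf)
  qed
  have "(\<Sum>k\<in>UNIV. Lam_pair \<Omega> w lam (u k) (\<lambda>x. pd k \<phi> x * \<psi> x)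
            - perp_pair \<Omega> i1 i2 (Lam \<Omega> w lam \<psi>) k (\<lambda>x. pd k \<phi> x * \<psi> x)) = P + A"
    unfolding sum_subtractf PP LP P_def by simp
  then show ?thesis unfolding LHS RR by (simp add: field_simps)
qed

end
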